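(* Let $A$ be a circular $m\times n$ matrix and let $b\in\mathbb{Z}_+^m$. Then $Q^*(A,b)$ is equal to the set of points $x\in\mathbb{R}^n$ satisfying $Ax\ge b$, $x\ge 0$, and all $\Gamma$-inequalities (with respect to $b$) for the circuits $\Gamma$ of $D(A)$ such that $p(\Gamma)\ge 2$ and $p(\Gamma)$ does not divide $t(\Gamma,b)$.
   Context: Notation: $[n]=\{1,\dots,n\}$ with addition modulo $n$ (index $0$ is identified with $n$). For $a,c\in[n]$, let $t\ge 0$ be minimal with $a+t\equiv c \pmod n$; then $[a,c]_n=\{a,a+1,\dots,a+t\}$ (mod $n$), $[a,c)_n=[a,c]_n\setminus\{c\}$, $(a,c]_n=[a,c]_n\setminus\{a\}$, $(a,c)_n=[a,c]_n\setminus\{a,c\}$. An $m\times n$ $\{0,1\}$-matrix $A$ (rows indexed by $[m]$, columns by $[n]$) is circular if for each row $i$ there are $\ell_i\in[n]$ and an integer $k_i$ with $2\le k_i\le n-1$ such that row $i$ is the incidence vector of $[\ell_i,\ell_i+k_i)_n$. For $b\in\mathbb{Z}_+^m$: $Q(A,b)=\{x\in\mathbb{R}^n: Ax\ge b,\ x\ge 0\}$ and $Q^*(A,b)=\operatorname{conv}(Q(A,b)\cap\mathbb{Z}^n)$. The digraph $D(A)$ (multigraph allowed) has node set $[n]$ (node labels mod $n$) and four arc sets: forward row arcs $a_i=(\ell_i-1,\ell_i+k_i-1)$, $i\in[m]$; forward short arcs $a_{m+j}=(j-1,j)$, $j\in[n]$; reverse row arcs $\bar a_i=(\ell_i+k_i-1,\ell_i-1)$,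 $i\in[m]$; reverse short arcs $\bar a_{m+j}=(j,j-1)$, $j\in[n]$. Lengths: $l(a_i)=k_i$, $l(\bar a_i)=-k_i$, forward short arcs have length $1$, reverse short arcs length $-1$. A circuit is a simple directed circuit; for a closed directed path $\Gamma$, its winding number $p(\Gamma)$ is the integer with $p(\Gamma)\,n=\sum_{a\in E(\Gamma)}l(a)$. A forward row arc $a_i$ jumps over node $j$ iff $j\in[\ell_i,\ell_i+k_i)_n$; the forward short arc $(j-1,j)$ jumps over node $j$ only; a reverse arc $\bar a_k$ jumps over $j$ iff $a_k$ does. $p^-(\Gamma,j)$ is the number of reverse arcs of $\Gamma$ jumping over $j$. For a circuit $\Gamma$: $t(\Gamma,b)=\sum_{i\in[m]:a_i\in E(\Gamma)}b_i-\sum_{i\in[m]:\bar a_i\in E(\Gamma)}b_i$; if $p(\Gamma)\neq 0$, $\beta(\Gamma,b)=\lfloor t(\Gamma,b)/p(\Gamma)\rfloor$, $r(\Gamma,b)=t(\Gamma,b)-\beta(\Gamma,b)p(\Gamma)$, and the $\Gamma$-inequality is $\sum_{j\in[n]}[p^-(\Gamma,j)+r(\Gamma,b)]x_j\ge r(\Gamma,b)(\beta(\Gamma,b)+1)+\sum_{i\in[m]:\bar a_i\in E(\Gamma)}b_i$. *)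

theory Defs
  imports Complex_Main
begin

text \<open>Nodes and columns are labelled by [n] = {1..n}; labels are reduced modulo n
  with 0 identified with n.\<close>

definition wrap :: "nat \<Rightarrow> int \<Rightarrow> int" where
  "wrap n a = (a - 1) mod int n + 1"

definition cint :: "nat \<Rightarrow> int \<Rightarrow> nat \<Rightarrow> int set" where
  "cint n a kk = {wrap n (a + int t) | t. t < kk}"

definition circular_with :: "nat \<Rightarrow> nat \<Rightarrow> (nat \<Rightarrow> nat \<Rightarrow> real) \<Rightarrow> (nat \<Rightarrow> nat) \<Rightarrow> (nat \<Rightarrow> nat) \<Rightarrow> bool" where
  "circular_with m n A l k \<longleftrightarrow>
     (\<forall>i\<in>{1..m}. l i \<in> {1..n} \<and> 2 \<le> k i \<and> k i \<le> n - 1 \<and>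
        (\<forall>j\<in>{1..n}. A i j = (if int j \<in> cint n (int (l i)) (k i) then 1 else 0)))"

text \<open>Points of R^n, represented as functions nat => real vanishing outside [n].\<close>
definition Rn :: "nat \<Rightarrow> (nat \<Rightarrow> real) set" where
  "Rn n = {x. \<forall>j. j \<notin> {1..n} \<longrightarrow> x j = 0}"

definition Q :: "nat \<Rightarrow> nat \<Rightarrow> (nat \<Rightarrow> nat \<Rightarrow> real) \<Rightarrow> (nat \<Rightarrow> int) \<Rightarrow> (nat \<Rightarrow> real) set" where
  "Q m n A b = {x \<in> Rn n. (\<forall>i\<in>{1..m}. (\<Sum>j=1..n. A i j * x j) \<ge> of_int (b i))
                          \<and> (\<forall>j\<in>{1..n}. x j \<ge> 0)}"

definition integral_points :: "nat \<Rightarrow> (nat \<Rightarrow> real) set" where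
  "integral_points n = {x \<in> Rn n. \<forall>j\<in>{1..n}. x j \<in> \<int>}"

definition conv :: "(nat \<Rightarrow> real) set \<Rightarrow> (nat \<Rightarrow> real) set" where
  "conv S = {x. \<exists>F c. finite F \<and> F \<noteq> {} \<and> F \<subseteq> S \<and> (\<forall>y\<in>F. c y \<ge> (0::real)) \<and> sum c F = 1
                     \<and> x = (\<lambda>j. \<Sum>y\<in>F. c y * y j)}"

definition Qstar :: "nat \<Rightarrow> nat \<Rightarrow> (nat \<Rightarrow> nat \<Rightarrow> real) \<Rightarrow> (nat \<Rightarrow> int) \<Rightarrow> (nat \<Rightarrow> real) set" where
  "Qstar m n A b = conv (Q m n A b \<inter> integral_points n)"

text \<open>Arcs of D(A): Row i = a_i, Short j = a_{m+j}, RevRow i = bar a_i, RevShort j = bar a_{m+j}.\<close>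
datatype arc = Row nat | Short nat | RevRow nat | RevShort nat

definition arcs :: "nat \<Rightarrow> nat \<Rightarrow> arc set" where
  "arcs m n = Row ` {1..m} \<union> Short ` {1..n} \<union> RevRow ` {1..m} \<union> RevShort ` {1..n}"

fun tail :: "nat \<Rightarrow> (nat \<Rightarrow> nat) \<Rightarrow> (nat \<Rightarrow> nat) \<Rightarrow> arc \<Rightarrow> int" where
  "tail n l k (Row i) = wrap n (int (l i) - 1)"
| "tail n l k (Short j) = wrap n (int j - 1)"
| "tail n l k (RevRow i) = wrap n (int (l i) + int (k i) - 1)"
| "tail n l k (RevShort j) = wrap n (int j)"

fun head :: "nat \<Rightarrow> (nat \<Rightarrow> nat) \<Rightarrow> (nat \<Rightarrow> nat) \<Rightarrow> arc \<Rightarrow> int" where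
  "head n l k (Row i) = wrap n (int (l i) + int (k i) - 1)"
| "head n l k (Short j) = wrap n (int j)"
| "head n l k (RevRow i) = wrap n (int (l i) - 1)"
| "head n l k (RevShort j) = wrap n (int j - 1)"

fun arc_len :: "(nat \<Rightarrow> nat) \<Rightarrow> arc \<Rightarrow> int" where
  "arc_len k (Row i) = int (k i)"
| "arc_len k (Short j) = 1"
| "arc_len k (RevRow i) = - int (k i)"
| "arc_len k (RevShort j) = -1"

fun is_reverse :: "arc \<Rightarrow> bool" where
  "is_reverse (RevRow i) = True"
| "is_reverse (RevShort j) = True"
| "is_reverse _ = False"

fun jumps :: "nat \<Rightarrow> (nat \<Rightarrow> nat) \<Rightarrow> (nat \<Rightarrow> nat) \<Rightarrow> arc \<Rightarrow> nat \<Rightarrow> bool" where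
  "jumps n l k (Row i) j = (int j \<in> cint n (int (l i)) (k i))"
| "jumps n l k (Short j') j = (j = j')"
| "jumps n l k (RevRow i) j = (int j \<in> cint n (int (l i)) (k i))"
| "jumps n l k (RevShort j') j = (j = j')"

text \<open>A (simple directed) circuit of D(A), given as the cyclic list of its arcs
  e_0, ..., e_(r-1): consecutive arcs are joined, it closes up, and no node is
  visited twice.\<close>
definition is_circuit :: "nat \<Rightarrow> nat \<Rightarrow> (nat \<Rightarrow> nat) \<Rightarrow> (nat \<Rightarrow> nat) \<Rightarrow> arc list \<Rightarrow> bool" where
  "is_circuit m n l k \<Gamma> \<longleftrightarrow>
     \<Gamma> \<noteq> [] \<and> set \<Gamma> \<subseteq> arcs m n \<and> distinct \<Gamma> \<and>
     (\<forall>s < length \<Gamma>. head n l k (\<Gamma> ! s) = tail n l k (\<Gamma> ! ((s + 1) mod length \<Gamma>))) \<and>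
     distinct (map (tail n l k) \<Gamma>)"

definition winding :: "nat \<Rightarrow> (nat \<Rightarrow> nat) \<Rightarrow> arc list \<Rightarrow> int" where
  "winding n k \<Gamma> = (\<Sum>a\<leftarrow>\<Gamma>. arc_len k a) div int n"

definition pminus :: "nat \<Rightarrow> (nat \<Rightarrow> nat) \<Rightarrow> (nat \<Rightarrow> nat) \<Rightarrow> arc list \<Rightarrow> nat \<Rightarrow> nat" where
  "pminus n l k \<Gamma> j = length (filter (\<lambda>a. is_reverse a \<and> jumps n l k a j) \<Gamma>)"

fun fwd_b :: "(nat \<Rightarrow> int) \<Rightarrow> arc \<Rightarrow> int" where
  "fwd_b b (Row i) = b i"
| "fwd_b b _ = 0"

fun rev_b :: "(nat \<Rightarrow> int) \<Rightarrow> arc \<Rightarrow> int" where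
  "rev_b b (RevRow i) = b i"
| "rev_b b _ = 0"

definition tval :: "(nat \<Rightarrow> int) \<Rightarrow> arc list \<Rightarrow> int" where
  "tval b \<Gamma> = (\<Sum>a\<leftarrow>\<Gamma>. fwd_b b a) - (\<Sum>a\<leftarrow>\<Gamma>. rev_b b a)"

definition beta :: "nat \<Rightarrow> (nat \<Rightarrow> nat) \<Rightarrow> (nat \<Rightarrow> int) \<Rightarrow> arc list \<Rightarrow> int" where
  "beta n k b \<Gamma> = \<lfloor>of_int (tval b \<Gamma>) / (of_int (winding n k \<Gamma>) :: real)\<rfloor>"

definition rval :: "nat \<Rightarrow> (nat \<Rightarrow> nat) \<Rightarrow> (nat \<Rightarrow> int) \<Rightarrow> arc list \<Rightarrow> int" where
  "rval n k b \<Gamma> = tval b \<Gamma> - beta n k b \<Gamma> * winding n k \<Gamma>"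

definition gamma_ineq :: "nat \<Rightarrow> (nat \<Rightarrow> nat) \<Rightarrow> (nat \<Rightarrow> nat) \<Rightarrow> (nat \<Rightarrow> int) \<Rightarrow> arc list \<Rightarrow> (nat \<Rightarrow> real) \<Rightarrow> bool" where
  "gamma_ineq n l k b \<Gamma> x \<longleftrightarrow>
     (\<Sum>j=1..n. (of_nat (pminus n l k \<Gamma> j) + of_int (rval n k b \<Gamma>)) * x j)
       \<ge> of_int (rval n k b \<Gamma> * (beta n k b \<Gamma> + 1) + (\<Sum>a\<leftarrow>\<Gamma>. rev_b b a))"

end

theory Submission
  imports Defs
begin


definition gconv :: "('a \<Rightarrow> real) set \<Rightarrow> ('a \<Rightarrow> real) set" where
  "gconv S = {x. \<exists>F c. finite F \<and> F \<noteq> {} \<and> F \<subseteq> S \<and> (\<forall>y\<in>F. c y \<ge> (0::real)) \<and> sum c F = 1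
                     \<and> x = (\<lambda>j. \<Sum>y\<in>F. c y * y j)}"

lemma conv_gconv: "conv S = gconv S"
  unfolding conv_def gconv_def by simp

lemma family_gconv:
  fixes v :: "'i \<Rightarrow> 'a \<Rightarrow> real"
  assumes "finite I" "v ` I \<subseteq> S" "\<forall>i\<in>I. c i \<ge> 0" "sum c I = 1"
  shows "(\<lambda>j. \<Sum>i\<in>I. c i * v i j) \<in> gconv S"
proof -
  define d where "d y = (\<Sum>i\<in>{i\<in>I. v i = y}. c i)" for y
  have fin: "finite (v ` I)" using assms(1) by simp
  have ne: "v ` I \<noteq> {}" using assms(4) by auto
  have d0: "\<forall>y\<in>v ` I. d y \<ge> 0" unfolding d_def using assms(3) by (auto intro: sum_nonneg)
  have "sum d (v ` I) = sum c I"
    unfolding d_def using sum.image_gen[OF assms(1), of c v] by simp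
  hence d1: "sum d (v ` I) = 1" using assms(4) by simp
  have eq: "(\<Sum>i\<in>I. c i * v i j) = (\<Sum>y\<in>v ` I. d y * y j)" for j
  proof -
    have "(\<Sum>i\<in>I. c i * v i j) = (\<Sum>y\<in>v ` I. \<Sum>i\<in>{i\<in>I. v i = y}. c i * v i j)"
      using sum.image_gen[OF assms(1), of "\<lambda>i. c i * v i j" v] by simp
    also have "\<dots> = (\<Sum>y\<in>v ` I. d y * y j)"
      unfolding d_def sum_distrib_right by (rule sum.cong) auto
    finally show ?thesis .
  qed
  show ?thesis unfolding gconv_def
    by (rule CollectI, rule exI[of _ "v ` I"], rule exI[of _ d]) (use fin ne assms(2) d0 d1 eq in auto)
qed

lemma gconv_single: "y \<in> S \<Longrightarrow> y \<in> gconv S"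
  unfolding gconv_def by (rule CollectI, rule exI[of _ "{y}"], rule exI[of _ "\<lambda>_. 1"]) auto

lemma gconv_comb:
  fixes S :: "('a \<Rightarrow> real) set"
  assumes "x1 \<in> gconv S" "x2 \<in> gconv S" "0 \<le> t" "t \<le> 1"
  shows "(\<lambda>j. t * x1 j + (1 - t) * x2 j) \<in> gconv S"
proof -
  obtain F1 c1 where F1: "finite F1" "F1 \<subseteq> S" "\<forall>y\<in>F1. c1 y \<ge> 0" "sum c1 F1 = 1"
    "x1 = (\<lambda>j. \<Sum>y\<in>F1. c1 y * y j)" using assms(1) unfolding gconv_def by blast
  obtain F2 c2 where F2: "finite F2" "F2 \<subseteq> S" "\<forall>y\<in>F2. c2 y \<ge> 0" "sum c2 F2 = 1"
    "x2 = (\<lambda>j. \<Sum>y\<in>F2. c2 y * y j)" using assms(2) unfolding gconv_def by blast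
  define v :: "('a \<Rightarrow> real) + ('a \<Rightarrow> real) \<Rightarrow> 'a \<Rightarrow> real" where "v i = (case i of Inl y \<Rightarrow> y | Inr y \<Rightarrow> y)" for i
  define c :: "('a \<Rightarrow> real) + ('a \<Rightarrow> real) \<Rightarrow> real" where "c i = (case i of Inl y \<Rightarrow> t * c1 y | Inr y \<Rightarrow> (1 - t) * c2 y)" for i
  have fin: "finite (F1 <+> F2)" using F1 F2 by simp
  have "(\<lambda>j. \<Sum>i\<in>F1 <+> F2. c i * v i j) \<in> gconv S"
  proof (rule family_gconv[OF fin])
    show "v ` (F1 <+> F2) \<subseteq> S" using F1 F2 unfolding v_def by auto
    show "\<forall>i\<in>F1 <+> F2. 0 \<le> c i" using F1 F2 assms(3,4) unfolding c_def by auto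
    show "sum c (F1 <+> F2) = 1" using F1 F2 unfolding c_def
      by (simp add: sum.Plus comp_def sum_distrib_left[symmetric])
  qed
  moreover have "(\<lambda>j. \<Sum>i\<in>F1 <+> F2. c i * v i j) = (\<lambda>j. t * x1 j + (1 - t) * x2 j)"
    using F1 F2 unfolding c_def v_def
    by (simp add: sum.Plus comp_def sum_distrib_left mult.assoc)
  ultimately show ?thesis by simp
qed

lemma gconv_mono: "S \<subseteq> T \<Longrightarrow> gconv S \<subseteq> gconv T"
  unfolding gconv_def by blast

lemma gconv_linear_ineq:
  fixes w :: "'a \<Rightarrow> real"
  assumes "x \<in> gconv S" "finite J" "\<forall>y\<in>S. (\<Sum>j\<in>J. w j * y j) \<ge> R"
  shows "(\<Sum>j\<in>J. w j * x j) \<ge> R"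
proof -
  obtain F c where F: "finite F" "F \<subseteq> S" "\<forall>y\<in>F. c y \<ge> 0" "sum c F = 1"
    "x = (\<lambda>j. \<Sum>y\<in>F. c y * y j)" using assms(1) unfolding gconv_def by blast
  have "(\<Sum>j\<in>J. w j * x j) = (\<Sum>y\<in>F. c y * (\<Sum>j\<in>J. w j * y j))"
    unfolding F(5) by (simp add: sum_distrib_left sum.swap[of _ J] mult.left_commute)
  also have "\<dots> \<ge> (\<Sum>y\<in>F. c y * R)"
    by (rule sum_mono) (use F assms(3) in \<open>auto intro: mult_left_mono\<close>)
  also have "(\<Sum>y\<in>F. c y * R) = R" using F(4) by (simp add: sum_distrib_right[symmetric])
  finally show ?thesis .
qed

lemma gconv_pointwise_eq:
  assumes "x \<in> gconv S" "\<forall>y\<in>S. y j = r"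
  shows "x j = r"
proof -
  obtain F c where F: "finite F" "F \<subseteq> S" "\<forall>y\<in>F. c y \<ge> 0" "sum c F = 1"
    "x = (\<lambda>j. \<Sum>y\<in>F. c y * y j)" using assms(1) unfolding gconv_def by blast
  have "x j = (\<Sum>y\<in>F. c y * r)" unfolding F(5) using F(2) assms(2) by (intro sum.cong) auto
  also have "\<dots> = r" using F(4) by (simp add: sum_distrib_right[symmetric])
  finally show ?thesis .
qed



definition okY :: "(int \<times> int \<times> int) set \<Rightarrow> nat \<Rightarrow> int \<Rightarrow> (int \<Rightarrow> real) \<Rightarrow> bool" where
  "okY C n \<sigma> Y \<longleftrightarrow> (\<forall>(z1,z2,c)\<in>C. of_int c \<le> Y z2 - Y z1) \<and>
       (\<forall>z. Y (z + int n) = Y z + of_int \<sigma>) \<and> Y 0 = 0"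

lemma per_nat:
  assumes "\<forall>z. Y (z + int n) = Y z + (s::real)"
  shows "Y (z + int q * int n) = Y z + of_nat q * s"
proof (induction q)
  case 0 then show ?case by simp
next
  case (Suc q)
  have "Y (z + int (Suc q) * int n) = Y ((z + int q * int n) + int n)" by (simp add: algebra_simps)
  also have "\<dots> = Y z + of_nat q * s + s" using assms Suc by simp
  finally show ?case by (simp add: algebra_simps)
qed

lemma per_int:
  assumes "\<forall>z. Y (z + int n) = Y z + (s::real)"
  shows "Y (z + q * int n) = Y z + of_int q * s"
proof (cases "q \<ge> 0")
  case True
  then obtain p where "q = int p" by (intro that[of "nat q"]) simp
  then show ?thesis using per_nat[OF assms] by simp
next
  case False
  then obtain p where p: "q = - int p" by (intro that[of "nat (- q)"]) simp
  have "Y z = Y ((z + q * int n) + int p * int n)" using p by (simp add: algebra_simps)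
  also have "\<dots> = Y (z + q * int n) + of_nat p * s" by (rule per_nat[OF assms])
  finally show ?thesis using p by simp
qed

lemma frac_per:
  fixes Y :: "int \<Rightarrow> real"
  assumes "n > 0" "\<forall>z. Y (z + int n) = Y z + of_int (\<sigma>::int)"
  shows "frac (Y z) = frac (Y (z mod int n))"
proof -
  have "z = z mod int n + (z div int n) * int n" by simp
  hence "Y z = Y (z mod int n) + of_int (z div int n) * of_int \<sigma>"
    using per_int[OF assms(2), of "z mod int n" "z div int n"] by simp
  hence e: "Y z = Y (z mod int n) + of_int ((z div int n) * \<sigma>)" by simp
  show ?thesis unfolding e by (rule frac_add_of_int_right)
qed

definition frs :: "nat \<Rightarrow> (int \<Rightarrow> real) \<Rightarrow> real set" where
  "frs n Y = (\<lambda>z. frac (Y z)) ` {0..<int n}"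

lemma frs_mem:
  fixes Y :: "int \<Rightarrow> real"
  assumes "n > 0" "\<forall>z. Y (z + int n) = Y z + of_int (\<sigma>::int)"
  shows "frac (Y z) \<in> frs n Y"
  unfolding frs_def using frac_per[OF assms, of z] assms(1)
  by (intro image_eqI[of _ _ "z mod int n"]) auto

lemma int_le_aux1:
  assumes "real_of_int c \<le> of_int N + d" "d < 1" shows "c \<le> N"
proof -
  have "real_of_int c < of_int (N + 1)" using assms by simp
  hence "c < N + 1" by linarith
  thus ?thesis by simp
qed

lemma int_le_aux2:
  assumes "real_of_int c \<le> of_int N + d" "d < 0" shows "c \<le> N - 1"
proof -
  have "real_of_int c < of_int N" using assms by simp
  hence "c < N" by linarith
  thus ?thesis by simp
qed

lemma rounding:
  assumes n: "n > 0"
  shows "okY C n \<sigma> Y \<Longrightarrow> Y \<in> gconv {Z. okY C n \<sigma> Z \<and> (\<forall>z. Z z \<in> \<int>)}"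
proof (induction "card (frs n Y)" arbitrary: Y rule: less_induct)
  case less
  let ?T = "{Z. okY C n \<sigma> Z \<and> (\<forall>z. Z z \<in> \<int>)}"
  have perY: "\<forall>z. Y (z + int n) = Y z + of_int \<sigma>" and Y0: "Y 0 = 0"
    and CY: "\<forall>(z1,z2,c)\<in>C. of_int c \<le> Y z2 - Y z1"
    using less.prems unfolding okY_def by auto
  have finF: "finite (frs n Y)" unfolding frs_def by simp
  have zeroF: "0 \<in> frs n Y" using frs_mem[OF n perY, of 0] Y0 by simp
  show ?case
  proof (cases "frs n Y \<subseteq> {0}")
    case True
    have "\<forall>z. Y z \<in> \<int>"
    proof
      fix z have "frac (Y z) = 0" using frs_mem[OF n perY, of z] True by auto
      thus "Y z \<in> \<int>" by (simp add: frac_eq_0_iff)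
    qed
    thus ?thesis using less.prems by (intro gconv_single) auto
  next
    case False
    define \<phi> where "\<phi> = Max (frs n Y)"
    define \<phi>2 where "\<phi>2 = Max (frs n Y - {\<phi>})"
    have phiF: "\<phi> \<in> frs n Y" unfolding \<phi>_def using finF zeroF by (intro Max_in) auto
    have phige: "\<forall>u\<in>frs n Y. u \<le> \<phi>" unfolding \<phi>_def using finF by auto
    obtain u where u: "u \<in> frs n Y" "u \<noteq> 0" using False by auto
    have "u \<ge> 0" using u(1) unfolding frs_def by (auto simp: frac_ge_0)
    hence phipos: "\<phi> > 0" using u phige by force
    have phi1: "\<phi> < 1" using phiF unfolding frs_def by (auto simp: frac_lt_1)
    have z2: "0 \<in> frs n Y - {\<phi>}" using zeroF phipos by auto
    have phi2F: "\<phi>2 \<in> frs n Y - {\<phi>}" unfolding \<phi>2_def using finF z2 by (intro Max_in) auto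
    have phi2ge: "\<forall>u\<in>frs n Y - {\<phi>}. u \<le> \<phi>2" unfolding \<phi>2_def using finF by auto
    have phi20: "\<phi>2 \<ge> 0" using phi2ge z2 by auto
    have phi2lt: "\<phi>2 < \<phi>" using phi2F phige by force
    define S where "S = {z. frac (Y z) = \<phi>}"
    have notS: "z \<notin> S \<Longrightarrow> frac (Y z) \<le> \<phi>2" for z
      using phi2ge frs_mem[OF n perY, of z] unfolding S_def by auto
    have Sper: "(z + int n \<in> S) = (z \<in> S)" for z
      unfolding S_def using perY by (simp add: frac_add_of_int_right)
    have zS: "0 \<notin> S" unfolding S_def using Y0 phipos by simp
    define Yp where "Yp z = Y z + (if z \<in> S then 1 - \<phi> else 0)" for z
    define Ym where "Ym z = Y z - (if z \<in> S then \<phi> - \<phi>2 else 0)" for z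
    have fl: "Y z = of_int \<lfloor>Y z\<rfloor> + frac (Y z)" for z by (simp add: frac_def)
    have okp: "okY C n \<sigma> Yp"
      unfolding okY_def
    proof (intro conjI)
      show "\<forall>z. Yp (z + int n) = Yp z + of_int \<sigma>" unfolding Yp_def using perY Sper by simp
      show "Yp 0 = 0" unfolding Yp_def using Y0 zS by simp
      show "\<forall>(z1,z2,c)\<in>C. of_int c \<le> Yp z2 - Yp z1"
      proof (clarify)
        fix t h c assume tc: "(t, h, c) \<in> C"
        have H: "of_int c \<le> Y h - Y t" using CY tc by auto
        show "of_int c \<le> Yp h - Yp t"
        proof (cases "t \<in> S \<and> h \<notin> S")
          case True
          have ft: "frac (Y t) = \<phi>" using True unfolding S_def by simp
          have fh: "frac (Y h) \<le> \<phi>2" using True notS by simp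
          have "of_int c \<le> of_int (\<lfloor>Y h\<rfloor> - \<lfloor>Y t\<rfloor>) + (frac (Y h) - \<phi>)"
            using H fl[of h] fl[of t] ft by simp
          hence "c \<le> \<lfloor>Y h\<rfloor> - \<lfloor>Y t\<rfloor> - 1" by (rule int_le_aux2) (use fh phi2lt in simp)
          hence "of_int c \<le> of_int (\<lfloor>Y h\<rfloor> - \<lfloor>Y t\<rfloor> - 1) + frac (Y h)"
            using frac_ge_0[of "Y h"] by linarith
          thus ?thesis unfolding Yp_def using True fl[of h] fl[of t] ft by simp
        next
          case False
          thus ?thesis unfolding Yp_def using H phi1 by auto
        qed
      qed
    qed
    have okm: "okY C n \<sigma> Ym"
      unfolding okY_def
    proof (intro conjI)
      show "\<forall>z. Ym (z + int n) = Ym z + of_int \<sigma>" unfolding Ym_def using perY Sper by simp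
      show "Ym 0 = 0" unfolding Ym_def using Y0 zS by simp
      show "\<forall>(z1,z2,c)\<in>C. of_int c \<le> Ym z2 - Ym z1"
      proof (clarify)
        fix t h c assume tc: "(t, h, c) \<in> C"
        have H: "of_int c \<le> Y h - Y t" using CY tc by auto
        show "of_int c \<le> Ym h - Ym t"
        proof (cases "h \<in> S \<and> t \<notin> S")
          case True
          have fh: "frac (Y h) = \<phi>" using True unfolding S_def by simp
          have ft: "frac (Y t) \<le> \<phi>2" using True notS by simp
          have "of_int c \<le> of_int (\<lfloor>Y h\<rfloor> - \<lfloor>Y t\<rfloor>) + (\<phi> - frac (Y t))"
            using H fl[of h] fl[of t] fh by simp
          hence "c \<le> \<lfloor>Y h\<rfloor> - \<lfloor>Y t\<rfloor>" by (rule int_le_aux1) (use frac_ge_0[of "Y t"] phi1 in linarith)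
          hence "of_int c \<le> of_int (\<lfloor>Y h\<rfloor> - \<lfloor>Y t\<rfloor>) + (\<phi>2 - frac (Y t))"
            using ft by linarith
          thus ?thesis unfolding Ym_def using True fl[of h] fl[of t] fh by simp
        next
          case False
          thus ?thesis unfolding Ym_def using H phi2lt by auto
        qed
      qed
    qed
    have perp: "\<forall>z. Yp (z + int n) = Yp z + of_int \<sigma>" using okp unfolding okY_def by simp
    have perm: "\<forall>z. Ym (z + int n) = Ym z + of_int \<sigma>" using okm unfolding okY_def by simp
    have subp: "frs n Yp \<subseteq> frs n Y - {\<phi>}"
    proof
      fix u assume "u \<in> frs n Yp"
      then obtain z where z: "u = frac (Yp z)" unfolding frs_def by auto
      show "u \<in> frs n Y - {\<phi>}"
      proof (cases "z \<in> S")
        case True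
        have "Yp z = of_int (\<lfloor>Y z\<rfloor> + 1)" unfolding Yp_def using True fl[of z] unfolding S_def by simp
        hence "u = 0" using z by simp
        thus ?thesis using z2 by simp
      next
        case False
        hence "u = frac (Y z)" using z unfolding Yp_def by simp
        thus ?thesis using False frs_mem[OF n perY, of z] unfolding S_def by simp
      qed
    qed
    have subm: "frs n Ym \<subseteq> frs n Y - {\<phi>}"
    proof
      fix u assume "u \<in> frs n Ym"
      then obtain z where z: "u = frac (Ym z)" unfolding frs_def by auto
      show "u \<in> frs n Y - {\<phi>}"
      proof (cases "z \<in> S")
        case True
        have "Ym z = \<phi>2 + of_int \<lfloor>Y z\<rfloor>" unfolding Ym_def using True fl[of z] unfolding S_def by simp
        hence "u = frac \<phi>2" using z by (simp add: frac_add_of_int_right)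
        also have "frac \<phi>2 = \<phi>2" using phi20 phi2lt phi1 by (simp add: frac_eq)
        finally show ?thesis using phi2F by simp
      next
        case False
        hence "u = frac (Y z)" using z unfolding Ym_def by simp
        thus ?thesis using False frs_mem[OF n perY, of z] unfolding S_def by simp
      qed
    qed
    have cD: "card (frs n Y - {\<phi>}) < card (frs n Y)" by (rule card_Diff1_less[OF finF phiF])
    have cp: "card (frs n Yp) < card (frs n Y)"
      using le_less_trans[OF card_mono[OF _ subp] cD] finF by simp
    have cm: "card (frs n Ym) < card (frs n Y)"
      using le_less_trans[OF card_mono[OF _ subm] cD] finF by simp
    have Ip: "Yp \<in> gconv ?T" using less.hyps[OF cp okp] .
    have Im: "Ym \<in> gconv ?T" using less.hyps[OF cm okm] .
    define t where "t = (\<phi> - \<phi>2) / (1 - \<phi>2)"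
    have t0: "0 \<le> t" "t \<le> 1" unfolding t_def using phi2lt phi1 phi20 by auto
    have "(\<lambda>z. t * Yp z + (1 - t) * Ym z) \<in> gconv ?T" by (rule gconv_comb[OF Ip Im t0])
    moreover have "(\<lambda>z. t * Yp z + (1 - t) * Ym z) = Y"
    proof
      fix z
      have d: "1 - \<phi>2 \<noteq> 0" using phi2lt phi1 by simp
      have e: "t * (1 - \<phi>) = (1 - t) * (\<phi> - \<phi>2)"
        unfolding t_def using d by (simp add: field_simps)
      show "t * Yp z + (1 - t) * Ym z = Y z"
        unfolding Yp_def Ym_def using e by (simp add: algebra_simps)
    qed
    ultimately show ?thesis by simp
  qed
qed



lemma wrap_range: "n > 0 \<Longrightarrow> 1 \<le> wrap n z \<and> wrap n z \<le> int n"
  unfolding wrap_def by (simp add: pos_mod_bound pos_mod_sign add1_zle_eq)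

lemma wrap_id: "1 \<le> z \<Longrightarrow> z \<le> int n \<Longrightarrow> wrap n z = z"
  unfolding wrap_def by simp

lemma wrap_wrap: "wrap n (wrap n a + b) = wrap n (a + b)"
proof -
  have "((a - 1) mod int n + b) mod int n = ((a - 1) + b) mod int n" by (rule mod_add_left_eq)
  thus ?thesis unfolding wrap_def by (simp add: algebra_simps)
qed

lemma wrap_wrap_minus: "wrap n (wrap n a - b) = wrap n (a - b)"
  using wrap_wrap[of n a "- b"] by simp

lemma wrap_wrap': "wrap n (b + wrap n a) = wrap n (b + a)"
  using wrap_wrap[of n a b] by (simp add: add.commute)

lemma wrap_add_n: "wrap n (z + int n) = wrap n z"
proof -
  have "(z + int n - 1) mod int n = ((z - 1) + int n) mod int n" by (simp add: algebra_simps)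
  thus ?thesis unfolding wrap_def by simp
qed

lemma wrap_dvd: "wrap n a = wrap n b \<Longrightarrow> int n dvd (a - b)"
  unfolding wrap_def by (simp add: mod_eq_dvd_iff)

definition liftf :: "nat \<Rightarrow> (nat \<Rightarrow> real) \<Rightarrow> int \<Rightarrow> real" where
  "liftf n g z = of_int (z div int n) * (\<Sum>j=1..n. g j) + (\<Sum>j=1..nat (z mod int n). g j)"

lemma lift0: "liftf n g 0 = 0" unfolding liftf_def by simp

lemma lift_per: "n > 0 \<Longrightarrow> liftf n g (z + int n) = liftf n g z + (\<Sum>j=1..n. g j)"
  unfolding liftf_def by (simp add: algebra_simps)

lemma lift_step:
  assumes n: "n > 0"
  shows "liftf n g z - liftf n g (z - 1) = g (nat (wrap n z))"
proof -
  define q where "q = z div int n"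
  define r where "r = z mod int n"
  have zr: "z = int n * q + r" unfolding q_def r_def by simp
  have r0: "0 \<le> r" "r < int n" unfolding r_def using n by auto
  show ?thesis
  proof (cases "r = 0")
    case True
    have m1: "(z - 1) mod int n = int n - 1"
    proof -
      have "(z - 1) mod int n = (r - 1) mod int n" unfolding r_def by (simp add: mod_diff_left_eq)
      also have "\<dots> = int n - 1" using True n by (simp add: zmod_minus1)
      finally show ?thesis .
    qed
    have d1: "(z - 1) div int n = q - 1"
    proof -
      define D where "D = (z - 1) div int n"
      have e: "int n * D + (z - 1) mod int n = z - 1" unfolding D_def by (rule mult_div_mod_eq)
      have e2: "int n * (q - 1) = int n * q - int n" by (simp add: right_diff_distrib)
      have "int n * (q - 1) = int n * D" using e e2 zr m1 True by linarith
      thus ?thesis using n unfolding D_def by simp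
    qed
    have w: "wrap n z = int n" unfolding wrap_def using m1 by simp
    have s: "(\<Sum>j=1..n. g j) = (\<Sum>j=1..n - 1. g j) + g n"
      using n by (cases n) (auto simp: sum.cl_ivl_Suc)
    define S where "S = (\<Sum>j=1..n. g j)"
    define S' where "S' = (\<Sum>j=1..n - 1. g j)"
    have A: "liftf n g z = of_int q * S" unfolding liftf_def S_def
      using True by (simp add: q_def[symmetric] r_def[symmetric])
    have nn: "nat (int n - 1) = n - 1" by simp
    have B: "liftf n g (z - 1) = of_int (q - 1) * S + S'" unfolding liftf_def S_def S'_def
      using d1 m1 nn by simp
    have C: "S = S' + g n" using s unfolding S_def S'_def .
    have "liftf n g z - liftf n g (z - 1) = g n" unfolding A B C by (simp add: algebra_simps)
    thus ?thesis using w by simp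
  next
    case False
    have m1: "(z - 1) mod int n = r - 1"
    proof -
      have "(z - 1) mod int n = (r - 1) mod int n" unfolding r_def by (simp add: mod_diff_left_eq)
      also have "\<dots> = r - 1" using False r0 by simp
      finally show ?thesis .
    qed
    have d1: "(z - 1) div int n = q"
    proof -
      define D where "D = (z - 1) div int n"
      have e: "int n * D + (z - 1) mod int n = z - 1" unfolding D_def by (rule mult_div_mod_eq)
      have "int n * q = int n * D" using e zr m1 by linarith
      thus ?thesis using n unfolding D_def by simp
    qed
    have w: "wrap n z = r" unfolding wrap_def using m1 by simp
    have s: "(\<Sum>j=1..nat r. g j) = (\<Sum>j=1..nat (r - 1). g j) + g (nat r)"
    proof -
      obtain p where p: "nat r = Suc p" using False r0 by (cases "nat r") auto
      have "nat (r - 1) = p" using p by simp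
      thus ?thesis using p by (simp add: sum.cl_ivl_Suc)
    qed
    show ?thesis unfolding liftf_def using d1 m1 w s
      by (simp add: r_def[symmetric] q_def[symmetric])
  qed
qed

lemma telescope:
  assumes "\<forall>z. G z - G (z - 1) = (g (nat (wrap n z)) :: real)"
  shows "(\<Sum>t<L. g (nat (wrap n (a + 1 + int t)))) = G (a + int L) - G a"
proof (induction L)
  case 0 then show ?case by simp
next
  case (Suc L)
  have "G (a + int (Suc L)) - G (a + int (Suc L) - 1) = g (nat (wrap n (a + int (Suc L))))"
    using assms by blast
  thus ?case using Suc by (simp add: algebra_simps)
qed

lemma cint_sum:
  assumes n: "n > 0" and L: "L \<le> n"
  shows "(\<Sum>j\<in>{j\<in>{1..n}. int j \<in> cint n a L}. g j) = (\<Sum>t<L. g (nat (wrap n (a + int t))))"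
proof -
  define h where "h t = nat (wrap n (a + int t))" for t
  have inj: "inj_on h {..<L}"
  proof
    fix t1 t2 assume t: "t1 \<in> {..<L}" "t2 \<in> {..<L}" "h t1 = h t2"
    have "int (nat (wrap n (a + int t1))) = int (nat (wrap n (a + int t2)))"
      using t(3) unfolding h_def by simp
    hence "wrap n (a + int t1) = wrap n (a + int t2)"
      using wrap_range[OF n, of "a + int t1"] wrap_range[OF n, of "a + int t2"] by simp
    hence "int n dvd (int t1 - int t2)" using wrap_dvd by fastforce
    moreover have "\<bar>int t1 - int t2\<bar> < int n" using t L by auto
    ultimately have "int t1 - int t2 = 0"
    proof (rule_tac ccontr)
      assume d: "int n dvd (int t1 - int t2)" "\<bar>int t1 - int t2\<bar> < int n" "int t1 - int t2 \<noteq> 0"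
      have "\<bar>int n\<bar> \<le> \<bar>int t1 - int t2\<bar>" by (rule dvd_imp_le_int[OF d(3) d(1)])
      thus False using d(2) by simp
    qed
    thus "t1 = t2" by simp
  qed
  have img: "{j\<in>{1..n}. int j \<in> cint n a L} = h ` {..<L}"
  proof (intro set_eqI iffI)
    fix j assume "j \<in> {j\<in>{1..n}. int j \<in> cint n a L}"
    then obtain t where t: "t < L" "int j = wrap n (a + int t)" unfolding cint_def by auto
    have "j = h t" unfolding h_def using t(2)[symmetric] by simp
    thus "j \<in> h ` {..<L}" using t(1) by blast
  next
    fix j assume "j \<in> h ` {..<L}"
    then obtain t where t: "t < L" "j = h t" by auto
    have r: "1 \<le> wrap n (a + int t) \<and> wrap n (a + int t) \<le> int n" by (rule wrap_range[OF n])
    have ij: "int j = wrap n (a + int t)" using t(2) r unfolding h_def by simp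
    have "int j \<in> cint n a L" unfolding cint_def using ij t(1) by blast
    moreover have "j \<in> {1..n}" using ij r by simp
    ultimately show "j \<in> {j\<in>{1..n}. int j \<in> cint n a L}" by simp
  qed
  show ?thesis unfolding img sum.reindex[OF inj] h_def by simp
qed



definition rows_ok :: "nat \<Rightarrow> nat \<Rightarrow> (nat \<Rightarrow> nat) \<Rightarrow> (nat \<Rightarrow> nat) \<Rightarrow> bool" where
  "rows_ok m n l k \<longleftrightarrow> (\<forall>i\<in>{1..m}. l i \<in> {1..n} \<and> k i \<le> n)"

definition Jsum :: "nat \<Rightarrow> (nat \<Rightarrow> nat) \<Rightarrow> (nat \<Rightarrow> nat) \<Rightarrow> (nat \<Rightarrow> real) \<Rightarrow> arc \<Rightarrow> real" where
  "Jsum n l k g a = (\<Sum>j\<in>{j\<in>{1..n}. jumps n l k a j}. g j)"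

definition sg :: "arc \<Rightarrow> real" where
  "sg a = (if is_reverse a then -1 else 1)"

lemma arc_tele:
  assumes n: "n > 0" and ro: "rows_ok m n l k" and a: "a \<in> arcs m n"
    and G: "\<forall>z. G z - G (z - 1) = (g (nat (wrap n z)) :: real)"
  shows "sg a * Jsum n l k g a = G (tail n l k a + arc_len k a) - G (tail n l k a)"
proof -
  have rowsum: "Jsum n l k g (Row i) = G (wrap n (int (l i) - 1) + int (k i)) - G (wrap n (int (l i) - 1))"
    if i: "i \<in> {1..m}" for i
  proof -
    have "Jsum n l k g (Row i) = (\<Sum>t<k i. g (nat (wrap n (int (l i) + int t))))"
      unfolding Jsum_def jumps.simps using cint_sum[OF n, of "k i"] ro i unfolding rows_ok_def by auto
    also have "\<dots> = (\<Sum>t<k i. g (nat (wrap n (wrap n (int (l i) - 1) + 1 + int t))))"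
      by (intro sum.cong refl) (simp add: add.assoc wrap_wrap)
    also have "\<dots> = G (wrap n (int (l i) - 1) + int (k i)) - G (wrap n (int (l i) - 1))"
      by (rule telescope[OF G])
    finally show ?thesis .
  qed
  show ?thesis
  proof -
    consider (R) i where "a = Row i" "i \<in> {1..m}" | (S) j where "a = Short j" "j \<in> {1..n}"
      | (RR) i where "a = RevRow i" "i \<in> {1..m}" | (RS) j where "a = RevShort j" "j \<in> {1..n}"
      using a unfolding arcs_def by blast
    then show ?thesis
    proof cases
      case (R i) then show ?thesis using rowsum[of i] by (simp add: sg_def)
    next
      case (S j)
      have js: "{j'\<in>{1..n}. jumps n l k a j'} = {j}" using S by auto
      have w: "wrap n (wrap n (int j - 1) + 1) = int j"
        using S by (simp add: wrap_wrap wrap_id)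
      have "G (wrap n (int j - 1) + 1) - G (wrap n (int j - 1) + 1 - 1) = g (nat (wrap n (wrap n (int j - 1) + 1)))"
        using G by blast
      then show ?thesis using S js w unfolding Jsum_def by (simp add: sg_def)
    next
      case (RR i)
      define T where "T = wrap n (int (l i) + int (k i) - 1)"
      have "Jsum n l k g (RevRow i) = Jsum n l k g (Row i)" unfolding Jsum_def by simp
      also have "\<dots> = (\<Sum>t<k i. g (nat (wrap n (int (l i) + int t))))"
        unfolding Jsum_def jumps.simps using cint_sum[OF n, of "k i"] ro RR unfolding rows_ok_def by auto
      also have "\<dots> = (\<Sum>t<k i. g (nat (wrap n ((T - int (k i)) + 1 + int t))))"
      proof (intro sum.cong refl)
        fix t
        have "wrap n ((T - int (k i)) + 1 + int t) = wrap n (T + (1 + int t - int (k i)))"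
          by (simp add: algebra_simps)
        also have "\<dots> = wrap n (int (l i) + int t)" unfolding T_def wrap_wrap by (simp add: algebra_simps)
        finally show "g (nat (wrap n (int (l i) + int t))) = g (nat (wrap n ((T - int (k i)) + 1 + int t)))" by simp
      qed
      also have "\<dots> = G T - G (T - int (k i))" using telescope[OF G, where L = "k i" and a = "T - int (k i)"] by simp
      finally show ?thesis using RR unfolding T_def by (simp add: sg_def)
    next
      case (RS j)
      have js: "{j'\<in>{1..n}. jumps n l k a j'} = {j}" using RS by auto
      have w: "wrap n (int j) = int j" using RS by (simp add: wrap_id)
      have "G (int j) - G (int j - 1) = g (nat (wrap n (int j)))" using G by blast
      then show ?thesis using RS js w unfolding Jsum_def by (simp add: sg_def)
    qed
  qed
qed

lemma arc_head:
  assumes "a \<in> arcs m n"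
  shows "wrap n (tail n l k a + arc_len k a) = head n l k a"
proof -
  have r: "wrap n (int (k i) + wrap n (int (l i) - 1)) = wrap n (int (k i) + int (l i) - 1)" for i
    using wrap_wrap'[of n "int (k i)" "int (l i) - 1"] by (simp add: algebra_simps)
  have s: "wrap n (1 + wrap n (int j - 1)) = wrap n (int j)" for j
    using wrap_wrap'[of n 1 "int j - 1"] by simp
  have rr: "wrap n (wrap n (int (k i) + int (l i) - 1) - int (k i)) = wrap n (int (l i) - 1)" for i
    using wrap_wrap_minus[of n "int (k i) + int (l i) - 1" "int (k i)"] by simp
  have rs: "wrap n (wrap n (int j) - 1) = wrap n (int j - 1)" for j
    using wrap_wrap_minus[of n "int j" 1] by simp
  consider (R) i where "a = Row i" | (S) j where "a = Short j"
      | (RR) i where "a = RevRow i" | (RS) j where "a = RevShort j" by (cases a) auto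
  then show ?thesis
  proof cases
    case (R i) then show ?thesis using r[of i] by (simp add: add.commute)
  next
    case (S j) then show ?thesis using s[of j] by (simp add: add.commute)
  next
    case (RR i) then show ?thesis using rr[of i] by (simp add: add.commute)
  next
    case (RS j) then show ?thesis using rs[of j] by simp
  qed
qed



lemma rot_sum:
  fixes f :: "nat \<Rightarrow> 'b::comm_monoid_add"
  assumes "L > 0"
  shows "(\<Sum>s<L. f ((s + 1) mod L)) = (\<Sum>s<L. f s)"
proof -
  obtain L' where L: "L = Suc L'" using assms by (cases L) auto
  have "(\<Sum>s<Suc L'. f ((s + 1) mod Suc L')) = (\<Sum>s<L'. f ((s + 1) mod Suc L')) + f ((L' + 1) mod Suc L')"
    by simp
  also have "(\<Sum>s<L'. f ((s + 1) mod Suc L')) = (\<Sum>s<L'. f (Suc s))"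
    by (intro sum.cong refl) simp
  also have "f ((L' + 1) mod Suc L') = f 0" by simp
  also have "(\<Sum>s<L'. f (Suc s)) + f 0 = (\<Sum>s<Suc L'. f s)"
    using sum.lessThan_Suc_shift[of f L'] by (simp only: add.commute)
  finally show ?thesis using L by simp
qed

lemma sum_list_idx: "(\<Sum>a\<leftarrow>xs. f a) = (\<Sum>s<length xs. f (xs ! s))"
  by (simp add: sum_list_sum_nth atLeast0LessThan)

lemma rotate_sum:
  fixes F :: "'v \<Rightarrow> 'b::comm_monoid_add" and H T :: "'e \<Rightarrow> 'v"
  assumes "\<Gamma> \<noteq> []" "\<forall>s<length \<Gamma>. H (\<Gamma>!s) = T (\<Gamma>!((s+1) mod length \<Gamma>))"
  shows "(\<Sum>a\<leftarrow>\<Gamma>. F (H a)) = (\<Sum>a\<leftarrow>\<Gamma>. F (T a))"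
proof -
  have "(\<Sum>a\<leftarrow>\<Gamma>. F (H a)) = (\<Sum>s<length \<Gamma>. F (H (\<Gamma>!s)))" by (rule sum_list_idx)
  also have "\<dots> = (\<Sum>s<length \<Gamma>. F (T (\<Gamma>!((s+1) mod length \<Gamma>))))"
    using assms(2) by (intro sum.cong refl) auto
  also have "\<dots> = (\<Sum>s<length \<Gamma>. F (T (\<Gamma>!s)))"
    by (rule rot_sum[where f = "\<lambda>s. F (T (\<Gamma>!s))"]) (use assms(1) in simp)
  also have "\<dots> = (\<Sum>a\<leftarrow>\<Gamma>. F (T a))" by (rule sum_list_idx[symmetric])
  finally show ?thesis .
qed

lemma of_int_sum_list': "of_int (\<Sum>a\<leftarrow>xs. f a) = (\<Sum>a\<leftarrow>xs. (of_int (f a) :: real))"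
  by (induction xs) auto

definition qq :: "nat \<Rightarrow> (nat \<Rightarrow> nat) \<Rightarrow> (nat \<Rightarrow> nat) \<Rightarrow> arc \<Rightarrow> int" where
  "qq n l k a = (tail n l k a + arc_len k a - head n l k a) div int n"

lemma head_range: "n > 0 \<Longrightarrow> 1 \<le> head n l k a \<and> head n l k a \<le> int n"
  by (cases a) (auto simp: wrap_range)

lemma tail_range: "n > 0 \<Longrightarrow> 1 \<le> tail n l k a \<and> tail n l k a \<le> int n"
  by (cases a) (auto simp: wrap_range)

lemma arc_q:
  assumes n: "n > 0" and a: "a \<in> arcs m n"
  shows "tail n l k a + arc_len k a = head n l k a + qq n l k a * int n"
proof -
  have h: "wrap n (head n l k a) = head n l k a" using head_range[OF n] wrap_id by blast
  have "wrap n (tail n l k a + arc_len k a) = wrap n (head n l k a)" using arc_head[OF a] h by simp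
  hence "int n dvd (tail n l k a + arc_len k a - head n l k a)" by (rule wrap_dvd)
  thus ?thesis unfolding qq_def by (auto elim!: dvdE)
qed

lemma circuit_len:
  assumes n: "n > 0" and C: "is_circuit m n l k \<Gamma>"
  shows "(\<Sum>a\<leftarrow>\<Gamma>. arc_len k a) = int n * (\<Sum>a\<leftarrow>\<Gamma>. qq n l k a)"
    and "winding n k \<Gamma> = (\<Sum>a\<leftarrow>\<Gamma>. qq n l k a)"
proof -
  have ne: "\<Gamma> \<noteq> []" and sub: "set \<Gamma> \<subseteq> arcs m n"
    and lk: "\<forall>s<length \<Gamma>. head n l k (\<Gamma>!s) = tail n l k (\<Gamma>!((s+1) mod length \<Gamma>))"
    using C unfolding is_circuit_def by auto
  have rot: "(\<Sum>a\<leftarrow>\<Gamma>. head n l k a) = (\<Sum>a\<leftarrow>\<Gamma>. tail n l k a)"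
    using rotate_sum[OF ne lk, of "\<lambda>x. x"] by simp
  have "(\<Sum>a\<leftarrow>\<Gamma>. arc_len k a) = (\<Sum>a\<leftarrow>\<Gamma>. (head n l k a - tail n l k a) + qq n l k a * int n)"
  proof (rule arg_cong[where f = sum_list], rule map_cong[OF refl])
    fix a assume "a \<in> set \<Gamma>"
    hence "a \<in> arcs m n" using sub by auto
    from arc_q[OF n this, of l k]
    show "arc_len k a = head n l k a - tail n l k a + qq n l k a * int n" by linarith
  qed
  also have "\<dots> = int n * (\<Sum>a\<leftarrow>\<Gamma>. qq n l k a)"
    using rot by (simp add: sum_list_addf sum_list_subtractf sum_list_mult_const sum_list_const_mult mult.commute)
  finally show L: "(\<Sum>a\<leftarrow>\<Gamma>. arc_len k a) = int n * (\<Sum>a\<leftarrow>\<Gamma>. qq n l k a)" .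
  show "winding n k \<Gamma> = (\<Sum>a\<leftarrow>\<Gamma>. qq n l k a)"
    unfolding winding_def L using n by simp
qed

lemma circuit_G:
  assumes n: "n > 0" and C: "is_circuit m n l k \<Gamma>"
    and per: "\<forall>z. G (z + int n) = G z + (S::real)"
  shows "(\<Sum>a\<leftarrow>\<Gamma>. G (tail n l k a + arc_len k a) - G (tail n l k a)) = of_int (winding n k \<Gamma>) * S"
proof -
  have ne: "\<Gamma> \<noteq> []" and sub: "set \<Gamma> \<subseteq> arcs m n"
    and lk: "\<forall>s<length \<Gamma>. head n l k (\<Gamma>!s) = tail n l k (\<Gamma>!((s+1) mod length \<Gamma>))"
    using C unfolding is_circuit_def by auto
  have rot: "(\<Sum>a\<leftarrow>\<Gamma>. G (head n l k a)) = (\<Sum>a\<leftarrow>\<Gamma>. G (tail n l k a))"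
    using rotate_sum[OF ne lk, of G] by simp
  have "(\<Sum>a\<leftarrow>\<Gamma>. G (tail n l k a + arc_len k a) - G (tail n l k a))
      = (\<Sum>a\<leftarrow>\<Gamma>. (G (head n l k a) - G (tail n l k a)) + of_int (qq n l k a) * S)"
  proof (rule arg_cong[where f = sum_list], rule map_cong[OF refl])
    fix a assume "a \<in> set \<Gamma>"
    hence "a \<in> arcs m n" using sub by auto
    hence "tail n l k a + arc_len k a = head n l k a + qq n l k a * int n" using arc_q[OF n] by blast
    thus "G (tail n l k a + arc_len k a) - G (tail n l k a) = (G (head n l k a) - G (tail n l k a)) + of_int (qq n l k a) * S"
      using per_int[OF per, of "head n l k a" "qq n l k a"] by simp
  qed
  also have "\<dots> = of_int (\<Sum>a\<leftarrow>\<Gamma>. qq n l k a) * S"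
    using rot by (simp add: sum_list_addf sum_list_subtractf sum_list_mult_const of_int_sum_list')
  finally show ?thesis using circuit_len(2)[OF n C] by simp
qed



lemma circ_rows_ok: "circular_with m n A l k \<Longrightarrow> rows_ok m n l k"
  unfolding circular_with_def rows_ok_def by auto

lemma row_sum_eq:
  assumes "circular_with m n A l k" "i \<in> {1..m}"
  shows "(\<Sum>j=1..n. A i j * x j) = Jsum n l k x (Row i)"
proof -
  have "(\<Sum>j=1..n. A i j * x j) = (\<Sum>j=1..n. if int j \<in> cint n (int (l i)) (k i) then x j else 0)"
    using assms unfolding circular_with_def by (intro sum.cong refl) auto
  also have "\<dots> = (\<Sum>j\<in>{j\<in>{1..n}. int j \<in> cint n (int (l i)) (k i)}. x j)"
    by (rule sum.inter_filter[symmetric]) simp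
  also have "\<dots> = Jsum n l k x (Row i)" unfolding Jsum_def by simp
  finally show ?thesis .
qed

lemma Jsum_short: "j \<in> {1..n} \<Longrightarrow> Jsum n l k x (Short j) = x j"
  unfolding Jsum_def by (subgoal_tac "{j'\<in>{1..n}. jumps n l k (Short j) j'} = {j}") auto

lemma Jsum_revshort: "j \<in> {1..n} \<Longrightarrow> Jsum n l k x (RevShort j) = x j"
  unfolding Jsum_def by (subgoal_tac "{j'\<in>{1..n}. jumps n l k (RevShort j) j'} = {j}") auto

lemma Jsum_revrow: "Jsum n l k x (RevRow i) = Jsum n l k x (Row i)"
  unfolding Jsum_def by simp

lemma Jsum_ge:
  assumes circ: "circular_with m n A l k" and x: "x \<in> Q m n A b" and a: "a \<in> arcs m n"
  shows "Jsum n l k x a \<ge> of_int (fwd_b b a + rev_b b a)"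
proof -
  have rows: "\<forall>i\<in>{1..m}. (\<Sum>j=1..n. A i j * x j) \<ge> of_int (b i)" and nn: "\<forall>j\<in>{1..n}. x j \<ge> 0"
    using x unfolding Q_def by auto
  consider (R) i where "a = Row i" "i \<in> {1..m}" | (S) j where "a = Short j" "j \<in> {1..n}"
      | (RR) i where "a = RevRow i" "i \<in> {1..m}" | (RS) j where "a = RevShort j" "j \<in> {1..n}"
      using a unfolding arcs_def by blast
  then show ?thesis
  proof cases
    case (R i) then show ?thesis using rows[rule_format, of i] row_sum_eq[OF circ, of i x] by auto
  next
    case (S j) then show ?thesis using nn Jsum_short[of j n l k x] by auto
  next
    case (RR i) then show ?thesis using rows[rule_format, of i] row_sum_eq[OF circ, of i x] Jsum_revrow by auto
  next
    case (RS j) then show ?thesis using nn Jsum_revshort[of j n l k x] by auto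
  qed
qed

lemma pminus_sum:
  "(\<Sum>j=1..n. of_nat (length (filter (\<lambda>a. is_reverse a \<and> jumps n l k a j) xs)) * x j)
     = (\<Sum>a\<leftarrow>xs. if is_reverse a then Jsum n l k x a else 0)"
proof (induction xs)
  case Nil then show ?case by simp
next
  case (Cons a xs)
  have e: "(\<Sum>j=1..n. (if is_reverse a \<and> jumps n l k a j then 1 else 0) * x j)
      = (if is_reverse a then Jsum n l k x a else 0)"
  proof -
    have "(\<Sum>j=1..n. (if is_reverse a \<and> jumps n l k a j then 1 else 0) * x j)
        = (\<Sum>j=1..n. if is_reverse a \<and> jumps n l k a j then x j else 0)" by (intro sum.cong refl) simp
    also have "\<dots> = (\<Sum>j\<in>{j\<in>{1..n}. is_reverse a \<and> jumps n l k a j}. x j)"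
      by (rule sum.inter_filter[symmetric]) simp
    also have "\<dots> = (if is_reverse a then Jsum n l k x a else 0)" unfolding Jsum_def by simp
    finally show ?thesis .
  qed
  have "(\<Sum>j=1..n. of_nat (length (filter (\<lambda>a. is_reverse a \<and> jumps n l k a j) (a # xs))) * x j)
      = (\<Sum>j=1..n. (if is_reverse a \<and> jumps n l k a j then 1 else 0) * x j
          + of_nat (length (filter (\<lambda>a. is_reverse a \<and> jumps n l k a j) xs)) * x j)"
    by (intro sum.cong refl) (simp add: algebra_simps)
  also have "\<dots> = (if is_reverse a then Jsum n l k x a else 0)
      + (\<Sum>j=1..n. of_nat (length (filter (\<lambda>a. is_reverse a \<and> jumps n l k a j) xs)) * x j)"
    using e by (simp add: sum.distrib)
  finally show ?case using Cons by simp
qed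

definition Fsum :: "nat \<Rightarrow> (nat \<Rightarrow> nat) \<Rightarrow> (nat \<Rightarrow> nat) \<Rightarrow> (nat \<Rightarrow> real) \<Rightarrow> arc list \<Rightarrow> real" where
  "Fsum n l k x \<Gamma> = (\<Sum>a\<leftarrow>\<Gamma>. if is_reverse a then 0 else Jsum n l k x a)"
definition Psum :: "nat \<Rightarrow> (nat \<Rightarrow> nat) \<Rightarrow> (nat \<Rightarrow> nat) \<Rightarrow> (nat \<Rightarrow> real) \<Rightarrow> arc list \<Rightarrow> real" where
  "Psum n l k x \<Gamma> = (\<Sum>a\<leftarrow>\<Gamma>. if is_reverse a then Jsum n l k x a else 0)"

lemma pminus_Psum: "(\<Sum>j=1..n. of_nat (pminus n l k \<Gamma> j) * x j) = Psum n l k x \<Gamma>"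
  unfolding pminus_def Psum_def by (rule pminus_sum)

lemma winding_x:
  assumes n: "n > 0" and ro: "rows_ok m n l k" and C: "is_circuit m n l k \<Gamma>"
  shows "Fsum n l k x \<Gamma> - Psum n l k x \<Gamma> = of_int (winding n k \<Gamma>) * (\<Sum>j=1..n. x j)"
proof -
  have sub: "set \<Gamma> \<subseteq> arcs m n" using C unfolding is_circuit_def by auto
  have G: "\<forall>z. liftf n x z - liftf n x (z - 1) = x (nat (wrap n z))" using lift_step[OF n] by blast
  have per: "\<forall>z. liftf n x (z + int n) = liftf n x z + (\<Sum>j=1..n. x j)" using lift_per[OF n] by blast
  have "Fsum n l k x \<Gamma> - Psum n l k x \<Gamma> = (\<Sum>a\<leftarrow>\<Gamma>. sg a * Jsum n l k x a)"
    unfolding Fsum_def Psum_def sum_list_subtractf[symmetric]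
    by (rule arg_cong[where f = sum_list], rule map_cong[OF refl]) (simp add: sg_def)
  also have "\<dots> = (\<Sum>a\<leftarrow>\<Gamma>. liftf n x (tail n l k a + arc_len k a) - liftf n x (tail n l k a))"
    by (rule arg_cong[where f = sum_list], rule map_cong[OF refl])
      (use arc_tele[OF n ro _ G] sub in blast)
  also have "\<dots> = of_int (winding n k \<Gamma>) * (\<Sum>j=1..n. x j)" by (rule circuit_G[OF n C per])
  finally show ?thesis .
qed

lemma Fsum_ge:
  assumes circ: "circular_with m n A l k" and x: "x \<in> Q m n A b" and C: "is_circuit m n l k \<Gamma>"
  shows "Fsum n l k x \<Gamma> \<ge> of_int (\<Sum>a\<leftarrow>\<Gamma>. fwd_b b a)"
proof -
  have sub: "set \<Gamma> \<subseteq> arcs m n" using C unfolding is_circuit_def by auto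
  have "of_int (\<Sum>a\<leftarrow>\<Gamma>. fwd_b b a) = (\<Sum>a\<leftarrow>\<Gamma>. (of_int (fwd_b b a) :: real))" by (rule of_int_sum_list')
  also have "\<dots> \<le> Fsum n l k x \<Gamma>" unfolding Fsum_def
  proof (rule sum_list_mono)
    fix a assume "a \<in> set \<Gamma>"
    hence a: "a \<in> arcs m n" using sub by auto
    show "of_int (fwd_b b a) \<le> (if is_reverse a then 0 else Jsum n l k x a)"
      using Jsum_ge[OF circ x a] by (cases a) auto
  qed
  finally show ?thesis .
qed

lemma Psum_ge:
  assumes circ: "circular_with m n A l k" and x: "x \<in> Q m n A b" and C: "is_circuit m n l k \<Gamma>"
  shows "Psum n l k x \<Gamma> \<ge> of_int (\<Sum>a\<leftarrow>\<Gamma>. rev_b b a)"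
proof -
  have sub: "set \<Gamma> \<subseteq> arcs m n" using C unfolding is_circuit_def by auto
  have "of_int (\<Sum>a\<leftarrow>\<Gamma>. rev_b b a) = (\<Sum>a\<leftarrow>\<Gamma>. (of_int (rev_b b a) :: real))" by (rule of_int_sum_list')
  also have "\<dots> \<le> Psum n l k x \<Gamma>" unfolding Psum_def
  proof (rule sum_list_mono)
    fix a assume "a \<in> set \<Gamma>"
    hence a: "a \<in> arcs m n" using sub by auto
    show "of_int (rev_b b a) \<le> (if is_reverse a then Jsum n l k x a else 0)"
      using Jsum_ge[OF circ x a] by (cases a) auto
  qed
  finally show ?thesis .
qed



lemma beta_div:
  assumes "winding n k \<Gamma> > 0"
  shows "beta n k b \<Gamma> = tval b \<Gamma> div winding n k \<Gamma>"
  unfolding beta_def by (rule floor_divide_of_int_eq)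

lemma rval_bounds:
  assumes "winding n k \<Gamma> > 0"
  shows "0 \<le> rval n k b \<Gamma>" "rval n k b \<Gamma> < winding n k \<Gamma>"
    "tval b \<Gamma> = beta n k b \<Gamma> * winding n k \<Gamma> + rval n k b \<Gamma>"
proof -
  have r: "rval n k b \<Gamma> = tval b \<Gamma> mod winding n k \<Gamma>"
    unfolding rval_def beta_div[OF assms] by (simp add: mod_div_decomp minus_div_mult_eq_mod)
  show "0 \<le> rval n k b \<Gamma>" "rval n k b \<Gamma> < winding n k \<Gamma>" unfolding r using assms by auto
  show "tval b \<Gamma> = beta n k b \<Gamma> * winding n k \<Gamma> + rval n k b \<Gamma>" unfolding rval_def by simp
qed

lemma gamma_lhs:
  "(\<Sum>j=1..n. (of_nat (pminus n l k \<Gamma> j) + of_int r) * x j)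
     = Psum n l k x \<Gamma> + of_int r * (\<Sum>j=1..n. x j)"
  unfolding pminus_Psum[symmetric] by (simp add: algebra_simps sum.distrib sum_distrib_left)

lemma tval_real: "real_of_int (tval b \<Gamma>) = of_int (\<Sum>a\<leftarrow>\<Gamma>. fwd_b b a) - of_int (\<Sum>a\<leftarrow>\<Gamma>. rev_b b a)"
  unfolding tval_def by simp

lemma gamma_int:
  assumes n: "n > 0" and circ: "circular_with m n A l k" and y: "y \<in> Q m n A b"
    and yi: "\<forall>j\<in>{1..n}. y j \<in> \<int>"
    and C: "is_circuit m n l k \<Gamma>" and p: "winding n k \<Gamma> > 0"
  shows "gamma_ineq n l k b \<Gamma> y"
proof -
  define p where "p = winding n k \<Gamma>"
  define t where "t = tval b \<Gamma>"
  define \<beta> where "\<beta> = beta n k b \<Gamma>"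
  define r where "r = rval n k b \<Gamma>"
  define R where "R = (\<Sum>a\<leftarrow>\<Gamma>. rev_b b a)"
  define Fw where "Fw = (\<Sum>a\<leftarrow>\<Gamma>. fwd_b b a)"
  have tR: "t = Fw - R" unfolding t_def Fw_def R_def tval_def by simp
  have rb: "0 \<le> r" "r < p" "t = \<beta> * p + r" using rval_bounds[OF p] unfolding p_def r_def t_def \<beta>_def by auto
  have "(\<Sum>j=1..n. y j) \<in> \<int>" using yi by (intro Ints_sum) auto
  then obtain \<sigma> where \<sigma>: "(\<Sum>j=1..n. y j) = of_int \<sigma>" by (auto elim: Ints_cases)
  have ro: "rows_ok m n l k" by (rule circ_rows_ok[OF circ])
  have W: "Fsum n l k y \<Gamma> - Psum n l k y \<Gamma> = of_int p * of_int \<sigma>"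
    using winding_x[OF n ro C, of y] \<sigma> unfolding p_def by simp
  have F: "Fsum n l k y \<Gamma> \<ge> of_int Fw" using Fsum_ge[OF circ y C] unfolding Fw_def .
  have P: "Psum n l k y \<Gamma> \<ge> of_int R" using Psum_ge[OF circ y C] unfolding R_def .
  have goal: "Psum n l k y \<Gamma> + of_int r * of_int \<sigma> \<ge> of_int (r * (\<beta> + 1) + R)"
  proof (cases "\<sigma> \<ge> \<beta> + 1")
    case True
    have "r * (\<beta> + 1) \<le> r * \<sigma>" using True rb(1) by (rule mult_left_mono[OF _ ]) 
    hence "real_of_int (r * (\<beta> + 1)) \<le> of_int r * of_int \<sigma>" by (metis of_int_le_iff of_int_mult)
    thus ?thesis using P by simp
  next
    case False
    have "(p - r) * \<sigma> \<le> (p - r) * \<beta>" using False rb by (intro mult_left_mono) auto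
    hence A: "real_of_int ((p - r) * \<sigma>) \<le> of_int ((p - r) * \<beta>)" by (simp only: of_int_le_iff)
    have B: "Psum n l k y \<Gamma> \<ge> of_int Fw - of_int p * of_int \<sigma>" using W F by simp
    have "real_of_int (r * (\<beta> + 1) + R) = of_int t - of_int ((p - r) * \<beta>) + of_int R"
      using rb(3) by (simp add: algebra_simps)
    also have "\<dots> \<le> of_int t - of_int ((p - r) * \<sigma>) + of_int R" using A by simp
    also have "\<dots> = of_int Fw - of_int p * of_int \<sigma> + of_int r * of_int \<sigma>"
      using tR by (simp add: algebra_simps)
    also have "\<dots> \<le> Psum n l k y \<Gamma> + of_int r * of_int \<sigma>" using B by simp
    finally show ?thesis .
  qed
  show ?thesis unfolding gamma_ineq_def gamma_lhs \<sigma>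
    using goal unfolding r_def \<beta>_def R_def by simp
qed

lemma easy_dir:
  assumes n: "n > 0" and circ: "circular_with m n A l k"
    and x: "x \<in> Qstar m n A b"
  shows "x \<in> Q m n A b" "\<And>\<Gamma>. is_circuit m n l k \<Gamma> \<Longrightarrow> winding n k \<Gamma> > 0 \<Longrightarrow> gamma_ineq n l k b \<Gamma> x"
proof -
  let ?S = "Q m n A b \<inter> integral_points n"
  have xg: "x \<in> gconv ?S" using x unfolding Qstar_def conv_gconv .
  have Rn: "x \<in> Rn n" unfolding Rn_def
  proof (intro CollectI allI impI)
    fix j assume j: "j \<notin> {1..n}"
    show "x j = 0" by (rule gconv_pointwise_eq[OF xg]) (use j in \<open>auto simp: Q_def Rn_def\<close>)
  qed
  have rows: "\<forall>i\<in>{1..m}. (\<Sum>j=1..n. A i j * x j) \<ge> of_int (b i)"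
  proof
    fix i assume i: "i \<in> {1..m}"
    show "(\<Sum>j=1..n. A i j * x j) \<ge> of_int (b i)"
      by (rule gconv_linear_ineq[OF xg]) (use i in \<open>auto simp: Q_def\<close>)
  qed
  have nn: "\<forall>j\<in>{1..n}. x j \<ge> 0"
  proof
    fix j assume j: "j \<in> {1..n}"
    have "(\<Sum>j'\<in>{j}. 1 * x j') \<ge> 0"
      by (rule gconv_linear_ineq[OF xg]) (use j in \<open>auto simp: Q_def\<close>)
    thus "x j \<ge> 0" by simp
  qed
  show "x \<in> Q m n A b" unfolding Q_def using Rn rows nn by blast
  fix \<Gamma> assume C: "is_circuit m n l k \<Gamma>" and p: "winding n k \<Gamma> > 0"
  show "gamma_ineq n l k b \<Gamma> x" unfolding gamma_ineq_def
  proof (rule gconv_linear_ineq[OF xg])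
    show "finite {1..n}" by simp
    show "\<forall>y\<in>?S. real_of_int (rval n k b \<Gamma> * (beta n k b \<Gamma> + 1) + sum_list (map (rev_b b) \<Gamma>))
         \<le> (\<Sum>j = 1..n. (of_nat (pminus n l k \<Gamma> j) + of_int (rval n k b \<Gamma>)) * y j)"
    proof
      fix y assume y: "y \<in> ?S"
      have "gamma_ineq n l k b \<Gamma> y"
        by (rule gamma_int[OF n circ _ _ C p]) (use y in \<open>auto simp: integral_points_def\<close>)
      thus "real_of_int (rval n k b \<Gamma> * (beta n k b \<Gamma> + 1) + sum_list (map (rev_b b) \<Gamma>))
         \<le> (\<Sum>j = 1..n. (of_nat (pminus n l k \<Gamma> j) + of_int (rval n k b \<Gamma>)) * y j)"
        unfolding gamma_ineq_def .
    qed
  qed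
qed



definition Mdiff :: "nat \<Rightarrow> (int \<Rightarrow> real) \<Rightarrow> nat \<Rightarrow> real" where
  "Mdiff n Z = (\<lambda>j. if j \<in> {1..n} then Z (int j) - Z (int j - 1) else 0)"

lemma gconv_Mdiff:
  assumes "Y \<in> gconv T"
  shows "Mdiff n Y \<in> gconv (Mdiff n ` T)"
proof -
  obtain F c where F: "finite F" "F \<subseteq> T" "\<forall>y\<in>F. c y \<ge> 0" "sum c F = 1"
    "Y = (\<lambda>j. \<Sum>y\<in>F. c y * y j)" using assms unfolding gconv_def by blast
  have "(\<lambda>j. \<Sum>y\<in>F. c y * Mdiff n y j) \<in> gconv (Mdiff n ` T)"
    by (rule family_gconv) (use F in auto)
  moreover have "(\<lambda>j. \<Sum>y\<in>F. c y * Mdiff n y j) = Mdiff n (\<lambda>j. \<Sum>y\<in>F. c y * y j)"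
  proof
    fix j show "(\<Sum>y\<in>F. c y * Mdiff n y j) = Mdiff n (\<lambda>j. \<Sum>y\<in>F. c y * y j) j"
      unfolding Mdiff_def by (cases "j \<in> {1..n}") (auto simp: sum_subtractf right_diff_distrib)
  qed
  hence "(\<lambda>j. \<Sum>y\<in>F. c y * Mdiff n y j) = Mdiff n Y" using F(5) by simp
  ultimately show ?thesis by simp
qed

lemma step_from_per:
  assumes n: "n > 0" and per: "\<forall>z. Z (z + int n) = Z z + (s::real)"
  shows "Z z - Z (z - 1) = Mdiff n Z (nat (wrap n z))"
proof -
  define w where "w = wrap n z"
  have wr: "1 \<le> w" "w \<le> int n" using wrap_range[OF n] unfolding w_def by auto
  have "wrap n z = wrap n w" unfolding w_def using wrap_id wr w_def by simp
  hence "int n dvd (z - w)" by (rule wrap_dvd)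
  then obtain q where q: "z - w = int n * q" by (auto elim: dvdE)
  have z1: "Z z = Z w + of_int q * s" using per_int[OF per, of w q] q by (simp add: algebra_simps)
  have z2: "Z (z - 1) = Z (w - 1) + of_int q * s"
    using per_int[OF per, of "w - 1" q] q by (simp add: algebra_simps)
  have "Mdiff n Z (nat w) = Z w - Z (w - 1)" unfolding Mdiff_def using wr by auto
  thus ?thesis using z1 z2 unfolding w_def by simp
qed

definition Ccons :: "nat \<Rightarrow> nat \<Rightarrow> (nat \<Rightarrow> nat) \<Rightarrow> (nat \<Rightarrow> nat) \<Rightarrow> (nat \<Rightarrow> int) \<Rightarrow> (int \<times> int \<times> int) set" where
  "Ccons m n l k b = {(int j - 1, int j, 0) | j. j \<in> {1..n}} \<union>
      {(int (l i) - 1, int (l i) + int (k i) - 1, b i) | i. i \<in> {1..m}}"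

lemma row_tele:
  assumes n: "n > 0" and circ: "circular_with m n A l k" and i: "i \<in> {1..m}"
    and G: "\<forall>z. G z - G (z - 1) = (g (nat (wrap n z)) :: real)"
  shows "(\<Sum>j=1..n. A i j * g j) = G (int (l i) + int (k i) - 1) - G (int (l i) - 1)"
proof -
  have ki: "k i \<le> n" using circ i unfolding circular_with_def by fastforce
  have "(\<Sum>j=1..n. A i j * g j) = Jsum n l k g (Row i)" by (rule row_sum_eq[OF circ i])
  also have "\<dots> = (\<Sum>t<k i. g (nat (wrap n (int (l i) + int t))))"
    unfolding Jsum_def jumps.simps using cint_sum[OF n ki] by simp
  also have "\<dots> = (\<Sum>t<k i. g (nat (wrap n ((int (l i) - 1) + 1 + int t))))" by simp
  also have "\<dots> = G (int (l i) - 1 + int (k i)) - G (int (l i) - 1)" by (rule telescope[OF G])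
  finally show ?thesis by (simp add: algebra_simps)
qed

lemma round_Q:
  assumes n: "n > 0" and circ: "circular_with m n A l k" and x: "x \<in> Q m n A b"
    and \<sigma>: "(\<Sum>j=1..n. x j) = of_int \<sigma>"
  shows "x \<in> gconv (Q m n A b \<inter> integral_points n)"
proof -
  let ?C = "Ccons m n l k b"
  define Y where "Y = liftf n x"
  have G: "\<forall>z. Y z - Y (z - 1) = x (nat (wrap n z))" unfolding Y_def using lift_step[OF n] by blast
  have per: "\<forall>z. Y (z + int n) = Y z + of_int \<sigma>" unfolding Y_def using lift_per[OF n] \<sigma> by simp
  have rows: "\<forall>i\<in>{1..m}. (\<Sum>j=1..n. A i j * x j) \<ge> of_int (b i)" and nn: "\<forall>j\<in>{1..n}. x j \<ge> 0"
    and xR: "x \<in> Rn n" using x unfolding Q_def by auto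
  have okY: "okY ?C n \<sigma> Y" unfolding okY_def
  proof (intro conjI)
    show "\<forall>z. Y (z + int n) = Y z + of_int \<sigma>" by (rule per)
    show "Y 0 = 0" unfolding Y_def by (rule lift0)
    show "\<forall>(z1, z2, c)\<in>?C. real_of_int c \<le> Y z2 - Y z1"
    proof (clarify)
      fix z1 z2 c assume zc: "(z1, z2, c) \<in> ?C"
      show "real_of_int c \<le> Y z2 - Y z1"
      proof (cases "(z1, z2, c) \<in> {(int j - 1, int j, 0) | j. j \<in> {1..n}}")
        case True
        then obtain j where j: "j \<in> {1..n}" "z1 = int j - 1" "z2 = int j" "c = 0" by auto
        have "Y z2 - Y z1 = x (nat (wrap n (int j)))" using G j by simp
        also have "\<dots> = x j" using j wrap_id[of "int j" n] by simp
        finally show ?thesis using nn j by simp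
      next
        case False
        then obtain i where i: "i \<in> {1..m}" "z1 = int (l i) - 1" "z2 = int (l i) + int (k i) - 1" "c = b i"
          using zc unfolding Ccons_def by auto
        show ?thesis using row_tele[OF n circ i(1) G] rows[rule_format, OF i(1)] i by simp
      qed
    qed
  qed
  have "Y \<in> gconv {Z. okY ?C n \<sigma> Z \<and> (\<forall>z. Z z \<in> \<int>)}" by (rule rounding[OF n okY])
  hence "Mdiff n Y \<in> gconv (Mdiff n ` {Z. okY ?C n \<sigma> Z \<and> (\<forall>z. Z z \<in> \<int>)})" by (rule gconv_Mdiff)
  moreover have "Mdiff n Y = x"
  proof
    fix j show "Mdiff n Y j = x j"
    proof (cases "j \<in> {1..n}")
      case True
      have "Mdiff n Y j = x (nat (wrap n (int j)))" unfolding Mdiff_def using True G by simp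
      thus ?thesis using True wrap_id[of "int j" n] by simp
    next
      case False thus ?thesis using xR unfolding Mdiff_def Rn_def by auto
    qed
  qed
  moreover have "Mdiff n ` {Z. okY ?C n \<sigma> Z \<and> (\<forall>z. Z z \<in> \<int>)} \<subseteq> Q m n A b \<inter> integral_points n"
  proof
    fix y assume "y \<in> Mdiff n ` {Z. okY ?C n \<sigma> Z \<and> (\<forall>z. Z z \<in> \<int>)}"
    then obtain Z where Z: "okY ?C n \<sigma> Z" "\<forall>z. Z z \<in> \<int>" and y: "y = Mdiff n Z" by auto
    have perZ: "\<forall>z. Z (z + int n) = Z z + of_int \<sigma>" and CZ: "\<forall>(z1,z2,c)\<in>?C. of_int c \<le> Z z2 - Z z1"
      using Z(1) unfolding okY_def by auto
    have GZ: "\<forall>z. Z z - Z (z - 1) = y (nat (wrap n z))" using step_from_per[OF n perZ] y by blast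
    have yR: "y \<in> Rn n" unfolding y Rn_def Mdiff_def by simp
    have ynn: "\<forall>j\<in>{1..n}. y j \<ge> 0"
    proof
      fix j assume j: "j \<in> {1..n}"
      have "(int j - 1, int j, 0) \<in> ?C" unfolding Ccons_def using j by blast
      hence "0 \<le> Z (int j) - Z (int j - 1)" using CZ by fastforce
      thus "y j \<ge> 0" unfolding y Mdiff_def using j by simp
    qed
    have yrows: "\<forall>i\<in>{1..m}. (\<Sum>j=1..n. A i j * y j) \<ge> of_int (b i)"
    proof
      fix i assume i: "i \<in> {1..m}"
      have "(int (l i) - 1, int (l i) + int (k i) - 1, b i) \<in> ?C" unfolding Ccons_def using i by blast
      hence "of_int (b i) \<le> Z (int (l i) + int (k i) - 1) - Z (int (l i) - 1)" using CZ by fastforce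
      thus "(\<Sum>j=1..n. A i j * y j) \<ge> of_int (b i)" using row_tele[OF n circ i GZ] by simp
    qed
    have yint: "\<forall>j\<in>{1..n}. y j \<in> \<int>" unfolding y Mdiff_def using Z(2) by auto
    show "y \<in> Q m n A b \<inter> integral_points n"
      unfolding Q_def integral_points_def using yR ynn yrows yint by auto
  qed
  ultimately show ?thesis using gconv_mono by blast
qed



fun linked :: "('e \<Rightarrow> 'v) \<Rightarrow> ('e \<Rightarrow> 'v) \<Rightarrow> 'e list \<Rightarrow> bool" where
  "linked T H [] = True"
| "linked T H [a] = True"
| "linked T H (a # b # xs) = (H a = T b \<and> linked T H (b # xs))"

lemma linked_append:
  "linked T H (xs @ ys) \<longleftrightarrow> linked T H xs \<and> linked T H ys \<and> (xs \<noteq> [] \<and> ys \<noteq> [] \<longrightarrow> H (last xs) = T (hd ys))"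
proof (induction xs)
  case Nil then show ?case by simp
next
  case (Cons a xs)
  show ?case
  proof (cases xs)
    case Nil then show ?thesis by (cases ys) auto
  next
    case (Cons b xs') then show ?thesis using Cons.IH by auto
  qed
qed

lemma linked_nth: "linked T H xs \<Longrightarrow> Suc s < length xs \<Longrightarrow> H (xs ! s) = T (xs ! Suc s)"
proof (induction T H xs arbitrary: s rule: linked.induct)
  case (3 T H a b xs) then show ?case by (cases s) auto
qed auto

definition gcirc :: "'e set \<Rightarrow> ('e \<Rightarrow> 'v) \<Rightarrow> ('e \<Rightarrow> 'v) \<Rightarrow> 'e list \<Rightarrow> bool" where
  "gcirc E T H \<Gamma> \<longleftrightarrow> \<Gamma> \<noteq> [] \<and> set \<Gamma> \<subseteq> E \<and> distinct \<Gamma> \<and>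
     (\<forall>s < length \<Gamma>. H (\<Gamma> ! s) = T (\<Gamma> ! ((s + 1) mod length \<Gamma>))) \<and> distinct (map T \<Gamma>)"

lemma reduce_walk:
  fixes w :: "'e \<Rightarrow> real"
  assumes V: "finite V" "T ` E \<subseteq> V"
    and nneg: "\<forall>\<Gamma>. gcirc E T H \<Gamma> \<longrightarrow> 0 \<le> (\<Sum>a\<leftarrow>\<Gamma>. w a)"
  shows "set ws \<subseteq> E \<Longrightarrow> linked T H ws \<Longrightarrow> \<exists>ws'. set ws' \<subseteq> E \<and> linked T H ws' \<and> length ws' \<le> card V \<and>
           (ws \<noteq> [] \<longrightarrow> ws' \<noteq> [] \<and> H (last ws') = H (last ws)) \<and> (\<Sum>a\<leftarrow>ws'. w a) \<le> (\<Sum>a\<leftarrow>ws. w a)"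
proof (induction "length ws" arbitrary: ws rule: less_induct)
  case less
  show ?case
  proof (cases "length ws \<le> card V")
    case True then show ?thesis using less.prems by blast
  next
    case False
    have "set (map T ws) \<subseteq> V" using less.prems(1) V(2) by auto
    hence "card (set (map T ws)) \<le> card V" using V(1) by (rule card_mono[rotated])
    hence nd: "\<not> distinct (map T ws)" using False distinct_card by fastforce
    define P where "P d \<longleftrightarrow> (\<exists>i. 0 < d \<and> i + d < length ws \<and> T (ws ! i) = T (ws ! (i + d)))" for d
    have "\<exists>d. P d"
    proof -
      obtain i j where ij: "i < length ws" "j < length ws" "i \<noteq> j" "T (ws ! i) = T (ws ! j)"
        using nd unfolding distinct_conv_nth by auto
      show ?thesis
      proof (cases "i < j")
        case True then show ?thesis unfolding P_def using ij by (intro exI[of _ "j - i"] exI[of _ i]) auto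
      next
        case False then show ?thesis unfolding P_def using ij by (intro exI[of _ "i - j"] exI[of _ j]) auto
      qed
    qed
    then obtain d where Pd: "P d" and min: "\<And>d'. d' < d \<Longrightarrow> \<not> P d'"
      using exists_least_iff[of P] by blast
    then obtain i where i: "0 < d" "i + d < length ws" "T (ws ! i) = T (ws ! (i + d))" unfolding P_def by blast
    define A where "A = take i ws"
    define C where "C = take d (drop i ws)"
    define B where "B = drop (i + d) ws"
    have dd: "drop (i + d) ws = drop d (drop i ws)" by (simp add: add.commute)
    have wsABC: "ws = A @ C @ B" unfolding A_def B_def C_def dd by (simp only: append_take_drop_id)
    have lenC: "length C = d" unfolding C_def using i by simp
    have Cnth: "\<And>s. s < d \<Longrightarrow> C ! s = ws ! (i + s)" unfolding C_def using i by simp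
    have Bne: "B \<noteq> []" unfolding B_def using i by simp
    have hdB: "hd B = ws ! (i + d)" unfolding B_def using i by (simp add: hd_drop_conv_nth)
    have Cne: "C \<noteq> []" using lenC i by auto
    have hdC: "hd C = ws ! i" using Cnth[of 0] i Cne by (simp add: hd_conv_nth)
    have lk: "linked T H A" "linked T H (C @ B)" "A \<noteq> [] \<longrightarrow> H (last A) = T (hd C)"
      using less.prems(2) unfolding wsABC linked_append using Cne by auto
    have lkC: "linked T H C" "H (last C) = T (hd B)" using lk(2) Cne Bne unfolding linked_append by auto
    have lkB: "linked T H B" using lk(2) unfolding linked_append by auto
    have setC: "set C \<subseteq> E" using less.prems(1) unfolding wsABC by auto
    have gC: "gcirc E T H C" unfolding gcirc_def
    proof (intro conjI)
      show "C \<noteq> []" by (rule Cne)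
      show "set C \<subseteq> E" by (rule setC)
      show dm: "distinct (map T C)" unfolding distinct_conv_nth
      proof (intro allI impI)
        fix s1 s2 assume s: "s1 < length (map T C)" "s2 < length (map T C)" "s1 \<noteq> s2"
        show "map T C ! s1 \<noteq> map T C ! s2"
        proof
          assume eq: "map T C ! s1 = map T C ! s2"
          have eq': "T (ws ! (i + s1)) = T (ws ! (i + s2))" using eq s lenC Cnth by auto
          show False
          proof (cases "s1 < s2")
            case True
            have "P (s2 - s1)" unfolding P_def using True s lenC i eq'
              by (intro exI[of _ "i + s1"]) auto
            moreover have "s2 - s1 < d" using s lenC by auto
            ultimately show False using min by blast
          next
            case False
            hence "s2 < s1" using s by auto
            hence "P (s1 - s2)" unfolding P_def using s lenC i eq'
              by (intro exI[of _ "i + s2"]) auto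
            moreover have "s1 - s2 < d" using s lenC by auto
            ultimately show False using min by blast
          qed
        qed
      qed
      show "distinct C" using dm by (simp add: distinct_map)
      show "\<forall>s<length C. H (C ! s) = T (C ! ((s + 1) mod length C))"
      proof (intro allI impI)
        fix s assume s: "s < length C"
        show "H (C ! s) = T (C ! ((s + 1) mod length C))"
        proof (cases "Suc s < length C")
          case True then show ?thesis using linked_nth[OF lkC(1) True] by simp
        next
          case False
          hence ss: "Suc s = length C" using s by auto
          hence s1: "s = length C - 1" "(s + 1) mod length C = 0" by auto
          have "H (C ! s) = H (last C)" using s1 Cne by (simp add: last_conv_nth)
          also have "\<dots> = T (hd B)" by (rule lkC(2))
          also have "\<dots> = T (hd C)" using hdB hdC i(3) by simp
          also have "\<dots> = T (C ! 0)" using Cne by (simp add: hd_conv_nth)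
          finally show ?thesis using s1 by simp
        qed
      qed
    qed
    hence cC: "0 \<le> (\<Sum>a\<leftarrow>C. w a)" using nneg by blast
    define ws' where "ws' = A @ B"
    have "length ws = length A + length C + length B" using arg_cong[OF wsABC, of length] by simp
    hence lt: "length ws' < length ws" unfolding ws'_def using lenC i by simp
    have s': "set ws' \<subseteq> E" using less.prems(1) unfolding ws'_def wsABC by auto
    have l': "linked T H ws'" unfolding ws'_def linked_append
      using lk(1) lkB lk(3) hdB hdC i(3) by auto
    obtain ws'' where ws'': "set ws'' \<subseteq> E" "linked T H ws''" "length ws'' \<le> card V"
      "ws' \<noteq> [] \<longrightarrow> ws'' \<noteq> [] \<and> H (last ws'') = H (last ws')"
      "(\<Sum>a\<leftarrow>ws''. w a) \<le> (\<Sum>a\<leftarrow>ws'. w a)"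
      using less.hyps[OF lt s' l'] by blast
    have ne': "ws' \<noteq> []" and last': "last ws' = last ws" unfolding ws'_def wsABC using Bne by auto
    have "(\<Sum>a\<leftarrow>ws'. w a) \<le> (\<Sum>a\<leftarrow>ws. w a)" unfolding ws'_def wsABC using cC by simp
    hence "(\<Sum>a\<leftarrow>ws''. w a) \<le> (\<Sum>a\<leftarrow>ws. w a)" using ws''(5) by linarith
    moreover have "ws'' \<noteq> [] \<and> H (last ws'') = H (last ws)" using ws''(4) ne' last' by simp
    ultimately show ?thesis using ws''(1-3) by blast
  qed
qed

lemma potential:
  fixes w :: "'e \<Rightarrow> real"
  assumes E: "finite E" and nneg: "\<forall>\<Gamma>. gcirc E T H \<Gamma> \<longrightarrow> 0 \<le> (\<Sum>a\<leftarrow>\<Gamma>. w a)"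
  shows "\<exists>\<pi>. \<forall>a\<in>E. \<pi> (H a) \<le> \<pi> (T a) + w a"
proof -
  define V where "V = T ` E"
  have V: "finite V" "T ` E \<subseteq> V" unfolding V_def using E by auto
  define W where "W v = {ws. set ws \<subseteq> E \<and> linked T H ws \<and> length ws \<le> card V \<and> (ws = [] \<or> H (last ws) = v)}" for v
  have finW: "finite (W v)" for v
    by (rule finite_subset[OF _ finite_lists_length_le[OF E, of "card V"]]) (auto simp: W_def)
  have nilW: "[] \<in> W v" for v unfolding W_def by simp
  define \<pi> where "\<pi> v = Min ((\<lambda>ws. \<Sum>a\<leftarrow>ws. w a) ` W v)" for v
  have \<pi>le: "ws \<in> W v \<Longrightarrow> \<pi> v \<le> (\<Sum>a\<leftarrow>ws. w a)" for ws v
    unfolding \<pi>_def using finW by (intro Min_le) auto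
  have \<pi>in: "\<exists>ws\<in>W v. \<pi> v = (\<Sum>a\<leftarrow>ws. w a)" for v
  proof -
    have "\<pi> v \<in> (\<lambda>ws. \<Sum>a\<leftarrow>ws. w a) ` W v" unfolding \<pi>_def using finW nilW by (intro Min_in) auto
    thus ?thesis by auto
  qed
  show ?thesis
  proof (rule exI[of _ \<pi>], intro ballI)
    fix a assume a: "a \<in> E"
    obtain ws0 where ws0: "ws0 \<in> W (T a)" "\<pi> (T a) = (\<Sum>a\<leftarrow>ws0. w a)" using \<pi>in by blast
    have s1: "set (ws0 @ [a]) \<subseteq> E" using ws0(1) a unfolding W_def by auto
    have l1: "linked T H (ws0 @ [a])" using ws0(1) unfolding W_def linked_append by auto
    obtain ws' where ws': "set ws' \<subseteq> E" "linked T H ws'" "length ws' \<le> card V"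
      "ws' \<noteq> [] \<and> H (last ws') = H a" "(\<Sum>a\<leftarrow>ws'. w a) \<le> (\<Sum>a\<leftarrow>ws0 @ [a]. w a)"
      using reduce_walk[OF V nneg s1 l1] by auto
    have "ws' \<in> W (H a)" unfolding W_def using ws' by auto
    hence "\<pi> (H a) \<le> (\<Sum>a\<leftarrow>ws'. w a)" by (rule \<pi>le)
    also have "\<dots> \<le> \<pi> (T a) + w a" using ws'(5) ws0(2) by simp
    finally show "\<pi> (H a) \<le> \<pi> (T a) + w a" .
  qed
qed



lemma is_circuit_gcirc: "is_circuit m n l k \<Gamma> = gcirc (arcs m n) (tail n l k) (head n l k) \<Gamma>"
  unfolding is_circuit_def gcirc_def by simp

lemma finite_arcs: "finite (arcs m n)" unfolding arcs_def by simp

lemma Jsum_diff: "Jsum n l k (\<lambda>j. x j - y j) a = Jsum n l k x a - Jsum n l k y a"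
  unfolding Jsum_def by (simp add: sum_subtractf)

lemma Jsum_scale: "Jsum n l k (\<lambda>j. c * y j) a = c * Jsum n l k y a"
  unfolding Jsum_def by (simp add: sum_distrib_left)

lemma tele_nat: "(\<Sum>j=1..N. W (int j) - W (int j - 1)) = W (int N) - (W 0 :: real)"
  by (induction N) (auto simp: sum.cl_ivl_Suc)

lemma key_ineq:
  fixes Pp s f :: real
  assumes P0: "Pp \<ge> 0" and P1: "Pp \<ge> of_int t - of_int p * s"
    and f: "0 < f" "f < 1" and s: "s = of_int \<beta> + f"
    and G: "0 < t - p * \<beta> \<Longrightarrow> t - p * \<beta> < p \<Longrightarrow> Pp \<ge> of_int (t - p * \<beta>) * (1 - f)"
  shows "Pp \<ge> (1 - f) * of_int (t - p * \<beta>)"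
proof -
  define D where "D = t - p * \<beta>"
  have P1': "Pp \<ge> of_int D - of_int p * f" using P1 s unfolding D_def by (simp add: algebra_simps)
  have "(1 - f) * of_int D \<le> Pp"
  proof (cases "D \<le> 0")
    case True
    hence "(1 - f) * of_int D \<le> 0" using f by (simp add: mult_nonneg_nonpos)
    thus ?thesis using P0 by linarith
  next
    case False
    show ?thesis
    proof (cases "p \<le> 0")
      case True
      have "of_int p * f \<le> 0" using True f by (simp add: mult_nonpos_nonneg)
      moreover have "(1 - f) * of_int D \<le> of_int D" using False f by (simp add: algebra_simps)
      ultimately show ?thesis using P1' by linarith
    next
      case pp: False
      show ?thesis
      proof (cases "D \<ge> p")
        case True
        have "f * of_int p \<le> f * of_int D" using True f by (intro mult_left_mono) auto
        thus ?thesis using P1' by (simp add: algebra_simps)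
      next
        case False
        have "Pp \<ge> of_int D * (1 - f)" using G \<open>\<not> D \<le> 0\<close> False unfolding D_def by simp
        thus ?thesis by (simp add: algebra_simps)
      qed
    qed
  qed
  thus ?thesis unfolding D_def .
qed

lemma hard_dir:
  assumes n: "n > 0" and circ: "circular_with m n A l k" and x: "x \<in> Q m n A b"
    and gam: "\<forall>\<Gamma>. is_circuit m n l k \<Gamma> \<and> winding n k \<Gamma> \<ge> 2
                          \<and> \<not> winding n k \<Gamma> dvd tval b \<Gamma> \<longrightarrow> gamma_ineq n l k b \<Gamma> x"
  shows "x \<in> gconv (Q m n A b \<inter> integral_points n)"
proof (cases "(\<Sum>j=1..n. x j) \<in> \<int>")
  case True
  then obtain \<sigma> where "(\<Sum>j=1..n. x j) = of_int \<sigma>" by (auto elim: Ints_cases)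
  thus ?thesis by (rule round_Q[OF n circ x])
next
  case False
  define s where "s = (\<Sum>j=1..n. x j)"
  define \<beta> where "\<beta> = \<lfloor>s\<rfloor>"
  define f where "f = s - of_int \<beta>"
  define c where "c = f * (of_int \<beta> + 1)"
  have f0: "0 < f" "f < 1"
  proof -
    have "f = frac s" unfolding f_def \<beta>_def frac_def by simp
    moreover have "frac s \<noteq> 0" using False unfolding s_def by (simp add: frac_eq_0_iff)
    ultimately show "0 < f" "f < 1" using frac_ge_0[of s] frac_lt_1[of s] by auto
  qed
  have sbf: "s = of_int \<beta> + f" unfolding f_def by simp
  have ro: "rows_ok m n l k" by (rule circ_rows_ok[OF circ])
  define w where "w a = (if is_reverse a then 0 else Jsum n l k x a)
       - (1 - f) * of_int (fwd_b b a) - f * of_int (rev_b b a) - c * of_int (qq n l k a)" for a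
  have nneg: "\<forall>\<Gamma>. gcirc (arcs m n) (tail n l k) (head n l k) \<Gamma> \<longrightarrow> 0 \<le> (\<Sum>a\<leftarrow>\<Gamma>. w a)"
  proof (intro allI impI)
    fix \<Gamma> assume "gcirc (arcs m n) (tail n l k) (head n l k) \<Gamma>"
    hence C: "is_circuit m n l k \<Gamma>" unfolding is_circuit_gcirc .
    define p where "p = winding n k \<Gamma>"
    define t where "t = tval b \<Gamma>"
    define R where "R = (\<Sum>a\<leftarrow>\<Gamma>. rev_b b a)"
    define Fw where "Fw = (\<Sum>a\<leftarrow>\<Gamma>. fwd_b b a)"
    have tR: "t = Fw - R" unfolding t_def Fw_def R_def tval_def by simp
    have tR': "real_of_int Fw = of_int t + of_int R" using tR by simp
    have W: "Fsum n l k x \<Gamma> - Psum n l k x \<Gamma> = of_int p * s"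
      using winding_x[OF n ro C, of x] unfolding p_def s_def .
    have Fg: "Fsum n l k x \<Gamma> \<ge> of_int Fw" using Fsum_ge[OF circ x C] unfolding Fw_def .
    have Pg: "Psum n l k x \<Gamma> \<ge> of_int R" using Psum_ge[OF circ x C] unfolding R_def .
    have qs: "(\<Sum>a\<leftarrow>\<Gamma>. qq n l k a) = p" using circuit_len(2)[OF n C] unfolding p_def by simp
    have sumw: "(\<Sum>a\<leftarrow>\<Gamma>. w a) = Fsum n l k x \<Gamma> - (1 - f) * of_int Fw - f * of_int R - c * of_int p"
      unfolding w_def Fsum_def Fw_def R_def qs[symmetric]
      by (simp add: sum_list_subtractf sum_list_const_mult of_int_sum_list')
    have key: "Psum n l k x \<Gamma> - of_int R \<ge> (1 - f) * of_int (t - p * \<beta>)"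
    proof (rule key_ineq[where s = s])
      show "0 \<le> Psum n l k x \<Gamma> - of_int R" using Pg by simp
      show "Psum n l k x \<Gamma> - of_int R \<ge> of_int t - of_int p * s" using Fg W tR by simp
      show "0 < f" "f < 1" by (rule f0)+
      show "s = of_int \<beta> + f" by (rule sbf)
      assume D: "0 < t - p * \<beta>" "t - p * \<beta> < p"
      have p2: "p \<ge> 2" using D by linarith
      have pp: "winding n k \<Gamma> > 0" using p2 unfolding p_def by simp
      have rb: "0 \<le> rval n k b \<Gamma>" "rval n k b \<Gamma> < p" "t = beta n k b \<Gamma> * p + rval n k b \<Gamma>"
        using rval_bounds[OF pp] unfolding p_def t_def by auto
      have be: "beta n k b \<Gamma> = \<beta>"
      proof (rule ccontr)
        assume ne: "beta n k b \<Gamma> \<noteq> \<beta>"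
        show False
        proof (cases "beta n k b \<Gamma> < \<beta>")
          case True
          hence "(beta n k b \<Gamma> + 1) * p \<le> \<beta> * p" using p2 by (intro mult_right_mono) auto
          thus False using rb D by (simp add: algebra_simps)
        next
          case False
          hence "(\<beta> + 1) * p \<le> beta n k b \<Gamma> * p" using ne p2 by (intro mult_right_mono) auto
          thus False using rb D by (simp add: algebra_simps)
        qed
      qed
      have re: "rval n k b \<Gamma> = t - p * \<beta>" using rb(3) be by simp
      have nd: "\<not> p dvd t"
      proof
        assume "p dvd t"
        then obtain q where "t = p * q" by (auto elim: dvdE)
        hence "p * (q - \<beta>) = t - p * \<beta>" by (simp add: algebra_simps)
        moreover have "q - \<beta> \<ge> 1"
        proof (rule ccontr)
          assume "\<not> q - \<beta> \<ge> 1"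
          hence "q - \<beta> \<le> 0" by simp
          hence "p * (q - \<beta>) \<le> 0" using p2 by (simp add: mult_nonneg_nonpos)
          thus False using D \<open>p * (q - \<beta>) = t - p * \<beta>\<close> by simp
        qed
        hence "p * 1 \<le> p * (q - \<beta>)" using p2 by (intro mult_left_mono) auto
        ultimately show False using D by simp
      qed
      have gi: "gamma_ineq n l k b \<Gamma> x" using gam C p2 nd unfolding p_def t_def by blast
      hence "Psum n l k x \<Gamma> + of_int (rval n k b \<Gamma>) * s \<ge> of_int (rval n k b \<Gamma> * (beta n k b \<Gamma> + 1) + R)"
        unfolding gamma_ineq_def gamma_lhs R_def s_def .
      hence "Psum n l k x \<Gamma> + of_int (t - p * \<beta>) * s \<ge> of_int ((t - p * \<beta>) * (\<beta> + 1) + R)"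
        unfolding re be .
      thus "Psum n l k x \<Gamma> - of_int R \<ge> of_int (t - p * \<beta>) * (1 - f)"
        using sbf by (simp add: algebra_simps)
    qed
    have "(\<Sum>a\<leftarrow>\<Gamma>. w a) = (Psum n l k x \<Gamma> - of_int R) - (1 - f) * of_int (t - p * \<beta>)"
      unfolding sumw c_def using W tR' sbf by (simp add: algebra_simps)
    thus "0 \<le> (\<Sum>a\<leftarrow>\<Gamma>. w a)" using key by simp
  qed
  obtain \<pi> where \<pi>: "\<forall>a\<in>arcs m n. \<pi> (head n l k a) \<le> \<pi> (tail n l k a) + w a"
    using potential[OF finite_arcs nneg] by blast
  define Wf where "Wf z = \<pi> (wrap n z) + c * of_int ((z - wrap n z) div int n)" for z
  have perW: "\<forall>z. Wf (z + int n) = Wf z + c"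
  proof
    fix z
    have "(z + int n - wrap n z) div int n = ((z - wrap n z) + int n) div int n"
      by (simp add: algebra_simps)
    also have "\<dots> = (z - wrap n z) div int n + 1" using n by (simp add: div_add_self2)
    finally have "(z + int n - wrap n z) div int n = (z - wrap n z) div int n + 1" .
    thus "Wf (z + int n) = Wf z + c" unfolding Wf_def wrap_add_n by (simp add: algebra_simps)
  qed
  define wv where "wv = Mdiff n Wf"
  have stepW: "\<forall>z. Wf z - Wf (z - 1) = wv (nat (wrap n z))"
    unfolding wv_def using step_from_per[OF n perW] by blast
  have arcW: "Wf (tail n l k a + arc_len k a) - Wf (tail n l k a) = \<pi> (head n l k a) - \<pi> (tail n l k a) + c * of_int (qq n l k a)"
    if a: "a \<in> arcs m n" for a
  proof -
    have tw: "wrap n (tail n l k a) = tail n l k a" using tail_range[OF n] wrap_id by blast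
    have "Wf (tail n l k a) = \<pi> (tail n l k a)" unfolding Wf_def tw by simp
    moreover have "Wf (tail n l k a + arc_len k a) = \<pi> (head n l k a) + c * of_int (qq n l k a)"
      unfolding Wf_def arc_head[OF a] qq_def by simp
    ultimately show ?thesis by simp
  qed
  have bound: "sg a * Jsum n l k wv a \<le> (if is_reverse a then 0 else Jsum n l k x a)
       - (1 - f) * of_int (fwd_b b a) - f * of_int (rev_b b a)" if a: "a \<in> arcs m n" for a
  proof -
    have "sg a * Jsum n l k wv a = Wf (tail n l k a + arc_len k a) - Wf (tail n l k a)"
      by (rule arc_tele[OF n ro a stepW])
    also have "\<dots> = \<pi> (head n l k a) - \<pi> (tail n l k a) + c * of_int (qq n l k a)" by (rule arcW[OF a])
    also have "\<dots> \<le> w a + c * of_int (qq n l k a)" using \<pi>[rule_format, OF a] by simp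
    finally show ?thesis unfolding w_def by simp
  qed
  have rowin: "i \<in> {1..m} \<Longrightarrow> Row i \<in> arcs m n" "i \<in> {1..m} \<Longrightarrow> RevRow i \<in> arcs m n" for i
    unfolding arcs_def by auto
  have shin: "j \<in> {1..n} \<Longrightarrow> Short j \<in> arcs m n" "j \<in> {1..n} \<Longrightarrow> RevShort j \<in> arcs m n" for j
    unfolding arcs_def by auto
  have b_row: "Jsum n l k wv (Row i) \<le> Jsum n l k x (Row i) - (1 - f) * of_int (b i)" if i: "i \<in> {1..m}" for i
    using bound[OF rowin(1)[OF i]] by (simp add: sg_def)
  have b_revrow: "Jsum n l k wv (Row i) \<ge> f * of_int (b i)" if i: "i \<in> {1..m}" for i
    using bound[OF rowin(2)[OF i]] by (simp add: sg_def Jsum_revrow)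
  have b_short: "wv j \<le> x j" if j: "j \<in> {1..n}" for j
    using bound[OF shin(1)[OF j]] j by (simp add: sg_def Jsum_short)
  have b_revshort: "wv j \<ge> 0" if j: "j \<in> {1..n}" for j
    using bound[OF shin(2)[OF j]] j by (simp add: sg_def Jsum_revshort)
  have wvR: "wv \<in> Rn n" unfolding wv_def Rn_def Mdiff_def by simp
  have xR: "x \<in> Rn n" and xrows: "\<forall>i\<in>{1..m}. (\<Sum>j=1..n. A i j * x j) \<ge> of_int (b i)"
    using x unfolding Q_def by auto
  have sumwv: "(\<Sum>j=1..n. wv j) = c"
  proof -
    have "(\<Sum>j=1..n. wv j) = (\<Sum>j=1..n. Wf (int j) - Wf (int j - 1))"
      unfolding wv_def Mdiff_def by (intro sum.cong refl) auto
    also have "\<dots> = Wf (int n) - Wf 0" by (rule tele_nat)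
    also have "\<dots> = c" using perW[rule_format, of 0] by simp
    finally show ?thesis .
  qed
  define x2 where "x2 j = inverse f * wv j" for j
  define x1 where "x1 j = inverse (1 - f) * (x j - wv j)" for j
  have fne: "f \<noteq> 0" "1 - f \<noteq> 0" using f0 by auto
  have x2Q: "x2 \<in> Q m n A b" unfolding Q_def
  proof (intro CollectI conjI ballI)
    show "x2 \<in> Rn n" using wvR unfolding x2_def Rn_def by simp
    fix j assume "j \<in> {1..n}" thus "x2 j \<ge> 0" unfolding x2_def using b_revshort f0 by simp
  next
    fix i assume i: "i \<in> {1..m}"
    have "(\<Sum>j=1..n. A i j * x2 j) = inverse f * Jsum n l k wv (Row i)"
      unfolding row_sum_eq[OF circ i] x2_def Jsum_scale ..
    also have "\<dots> \<ge> inverse f * (f * of_int (b i))"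
      using b_revrow[OF i] f0 by (intro mult_left_mono) auto
    moreover have "inverse f * (f * of_int (b i)) = of_int (b i)" using fne by (simp add: field_simps)
    ultimately show "(\<Sum>j=1..n. A i j * x2 j) \<ge> of_int (b i)" by simp
  qed
  have x1Q: "x1 \<in> Q m n A b" unfolding Q_def
  proof (intro CollectI conjI ballI)
    show "x1 \<in> Rn n" using wvR xR unfolding x1_def Rn_def by simp
    fix j assume "j \<in> {1..n}" thus "x1 j \<ge> 0" unfolding x1_def using b_short f0 by simp
  next
    fix i assume i: "i \<in> {1..m}"
    have "(\<Sum>j=1..n. A i j * x1 j) = inverse (1 - f) * (Jsum n l k x (Row i) - Jsum n l k wv (Row i))"
      unfolding row_sum_eq[OF circ i] x1_def Jsum_scale Jsum_diff ..
    also have "\<dots> \<ge> inverse (1 - f) * ((1 - f) * of_int (b i))"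
      using b_row[OF i] f0 by (intro mult_left_mono) auto
    moreover have "inverse (1 - f) * ((1 - f) * of_int (b i)) = of_int (b i)" using fne by (simp add: field_simps)
    ultimately show "(\<Sum>j=1..n. A i j * x1 j) \<ge> of_int (b i)" by simp
  qed
  have s2: "(\<Sum>j=1..n. x2 j) = of_int (\<beta> + 1)"
    unfolding x2_def sum_distrib_left[symmetric] sumwv c_def using fne by simp
  have s1: "(\<Sum>j=1..n. x1 j) = of_int \<beta>"
  proof -
    have "(\<Sum>j=1..n. x1 j) = inverse (1 - f) * (s - c)"
      unfolding x1_def sum_distrib_left[symmetric] sum_subtractf sumwv s_def ..
    also have "s - c = (1 - f) * of_int \<beta>" unfolding c_def using sbf by (simp add: algebra_simps)
    finally show ?thesis using fne by simp
  qed
  have g1: "x1 \<in> gconv (Q m n A b \<inter> integral_points n)" by (rule round_Q[OF n circ x1Q s1])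
  have g2: "x2 \<in> gconv (Q m n A b \<inter> integral_points n)" by (rule round_Q[OF n circ x2Q s2])
  have "(\<lambda>j. (1 - f) * x1 j + (1 - (1 - f)) * x2 j) \<in> gconv (Q m n A b \<inter> integral_points n)"
    by (rule gconv_comb[OF g1 g2]) (use f0 in auto)
  moreover have "(\<lambda>j. (1 - f) * x1 j + (1 - (1 - f)) * x2 j) = x"
  proof
    fix j
    have e1: "(1 - f) * (inverse (1 - f) * (x j - wv j)) = x j - wv j"
      using fne by (simp add: mult.assoc[symmetric])
    have e2: "f * (inverse f * wv j) = wv j" using fne by (simp add: mult.assoc[symmetric])
    have e3: "1 - (1 - f) = f" by simp
    show "(1 - f) * x1 j + (1 - (1 - f)) * x2 j = x j" unfolding x1_def x2_def e3 e1 e2 by simp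
  qed
  ultimately show ?thesis by simp
qed



theorem theorem4p8:
  fixes m n :: nat and A :: "nat \<Rightarrow> nat \<Rightarrow> real" and l k :: "nat \<Rightarrow> nat"
    and b :: "nat \<Rightarrow> int"
  assumes circ: "circular_with m n A l k"
    and bnn: "\<forall>i\<in>{1..m}. b i \<ge> 0"
  shows "Qstar m n A b =
    {x \<in> Q m n A b. \<forall>\<Gamma>. is_circuit m n l k \<Gamma> \<and> winding n k \<Gamma> \<ge> 2
                          \<and> \<not> winding n k \<Gamma> dvd tval b \<Gamma> \<longrightarrow> gamma_ineq n l k b \<Gamma> x}"
proof (cases "n = 0")
  case True
  have m0: "m = 0"
  proof (rule ccontr)
    assume "m \<noteq> 0"
    hence "1 \<in> {1..m}" by simp
    hence "l 1 \<in> {1..n}" using circ unfolding circular_with_def by blast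
    thus False using True by simp
  qed
  have noC: "\<not> is_circuit m n l k \<Gamma>" for \<Gamma>
    unfolding is_circuit_def arcs_def using True m0 by (cases \<Gamma>) auto
  show ?thesis
  proof (intro set_eqI iffI)
    fix x assume "x \<in> Qstar m n A b"
    hence xg: "x \<in> gconv (Q m n A b \<inter> integral_points n)" unfolding Qstar_def conv_gconv .
    have "x j = 0" for j
      by (rule gconv_pointwise_eq[OF xg]) (use True in \<open>auto simp: Q_def Rn_def\<close>)
    hence "x \<in> Q m n A b" unfolding Q_def Rn_def using m0 True by auto
    thus "x \<in> {x \<in> Q m n A b. \<forall>\<Gamma>. is_circuit m n l k \<Gamma> \<and> winding n k \<Gamma> \<ge> 2
                          \<and> \<not> winding n k \<Gamma> dvd tval b \<Gamma> \<longrightarrow> gamma_ineq n l k b \<Gamma> x}"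
      using noC by simp
  next
    fix x assume "x \<in> {x \<in> Q m n A b. \<forall>\<Gamma>. is_circuit m n l k \<Gamma> \<and> winding n k \<Gamma> \<ge> 2
                          \<and> \<not> winding n k \<Gamma> dvd tval b \<Gamma> \<longrightarrow> gamma_ineq n l k b \<Gamma> x}"
    hence x: "x \<in> Q m n A b" by simp
    have "x \<in> integral_points n" using x True unfolding integral_points_def Q_def by auto
    hence "x \<in> gconv (Q m n A b \<inter> integral_points n)" using x by (intro gconv_single) auto
    thus "x \<in> Qstar m n A b" unfolding Qstar_def conv_gconv .
  qed
next
  case False
  hence n: "n > 0" by simp
  show ?thesis
  proof (intro set_eqI iffI)
    fix x assume x: "x \<in> Qstar m n A b"
    have "x \<in> Q m n A b" by (rule easy_dir(1)[OF n circ x])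
    moreover have "gamma_ineq n l k b \<Gamma> x" if "is_circuit m n l k \<Gamma>" "winding n k \<Gamma> \<ge> 2" for \<Gamma>
      by (rule easy_dir(2)[OF n circ x that(1)]) (use that(2) in simp)
    ultimately show "x \<in> {x \<in> Q m n A b. \<forall>\<Gamma>. is_circuit m n l k \<Gamma> \<and> winding n k \<Gamma> \<ge> 2
                          \<and> \<not> winding n k \<Gamma> dvd tval b \<Gamma> \<longrightarrow> gamma_ineq n l k b \<Gamma> x}"
      by blast
  next
    fix x assume "x \<in> {x \<in> Q m n A b. \<forall>\<Gamma>. is_circuit m n l k \<Gamma> \<and> winding n k \<Gamma> \<ge> 2
                          \<and> \<not> winding n k \<Gamma> dvd tval b \<Gamma> \<longrightarrow> gamma_ineq n l k b \<Gamma> x}"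
    hence x: "x \<in> Q m n A b" and g: "\<forall>\<Gamma>. is_circuit m n l k \<Gamma> \<and> winding n k \<Gamma> \<ge> 2
                          \<and> \<not> winding n k \<Gamma> dvd tval b \<Gamma> \<longrightarrow> gamma_ineq n l k b \<Gamma> x" by auto
    have "x \<in> gconv (Q m n A b \<inter> integral_points n)" by (rule hard_dir[OF n circ x g])
    thus "x \<in> Qstar m n A b" unfolding Qstar_def conv_gconv .
  qed
qed


end
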